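(* Let $f\in\mathrm{Aut}(\mathbb B)$, $f\neq\mathrm{Id}$, be a regular Möbius transformation of $\mathbb B$ which is not elliptic, and suppose $f(\mathbb B_I)\subseteq\mathbb B_I$ for some $I\in\mathbb S$. Then there is a point $\tau\in\partial\mathbb B$ which is a fixed point of (the continuous extension to $\overline{\mathbb B}$ of) $f$ such that the iterates $f^{\odot n}$ converge to the constant $\tau$ uniformly on every compact subset of $\mathbb B$.
   Context: $\mathbb H$ quaternions, $\mathbb S=\{q:q^2=-1\}$, $\mathbb C_I=\mathbb R+I\mathbb R$, $\mathbb B$ open unit ball, $\mathbb B_I=\mathbb B\cap\mathbb C_I$. Slice regular functions on $\mathbb B$ are convergent power series $\sum_nq^na_n$, with $\ast$-product $\big(\sum q^na_n\big)\ast\big(\sum q^nb_n\big)=\sum_nq^n\sum_ka_kb_{n-k}$ and $\ast$-inverse $g^{-\ast}$. $\mathrm{Aut}(\mathbb B)$ is the group of regular bijective self-maps of $\mathbb B$, which are exactly the regular Möbius transformations $q\mapsto(1-q\bar a)^{-\ast}\ast(a-q)u$ with $a\in\mathbb B$, $u\in\partial\mathbb B$. Such a transformation is elliptic if it has exactly one fixed point in $\mathbb B$. Regular composition: $g^{\odot}\varphi=\sum_n\varphi^{\ast n}a_n$ for $g=\sum q^na_n$ and $\varphi:\mathbb B\to\mathbb B$ regular ($\varphi^{\ast0}=1$, $\varphi^{\ast n}=\varphi\ast\varphi^{\ast(n-1)}$). Iterates: $f^{\odot1}=f$, $f^{\odot(n+1)}=f^{\odot}(f^{\odot n})$ (well defined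 regular self-maps of $\mathbb B$ when $f(\mathbb B_I)\subseteq\mathbb B_I$). *)

theory Defs
  imports "HOL-Analysis.Analysis" "HOL-Computational_Algebra.Formal_Power_Series"
begin

codatatype quat = Quat (qre: real) (qi: real) (qj: real) (qk: real)

lemma quat_eq_iff: "x = y \<longleftrightarrow> qre x = qre y \<and> qi x = qi y \<and> qj x = qj y \<and> qk x = qk y"
  by (auto intro: quat.expand)

instantiation quat :: ab_group_add
begin
primcorec zero_quat where "qre 0 = 0" | "qi 0 = 0" | "qj 0 = 0" | "qk 0 = 0"
primcorec plus_quat where
  "qre (x + y) = qre x + qre y" | "qi (x + y) = qi x + qi y"
| "qj (x + y) = qj x + qj y" | "qk (x + y) = qk x + qk y"
primcorec uminus_quat where
  "qre (- x) = - qre x" | "qi (- x) = - qi x" | "qj (- x) = - qj x" | "qk (- x) = - qk x"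
primcorec minus_quat where
  "qre (x - y) = qre x - qre y" | "qi (x - y) = qi x - qi y"
| "qj (x - y) = qj x - qj y" | "qk (x - y) = qk x - qk y"
instance by standard (simp_all add: quat_eq_iff)
end

instantiation quat :: division_ring
begin
primcorec one_quat where "qre 1 = 1" | "qi 1 = 0" | "qj 1 = 0" | "qk 1 = 0"
primcorec times_quat where
  "qre (x * y) = qre x * qre y - qi x * qi y - qj x * qj y - qk x * qk y"
| "qi (x * y) = qre x * qi y + qi x * qre y + qj x * qk y - qk x * qj y"
| "qj (x * y) = qre x * qj y - qi x * qk y + qj x * qre y + qk x * qi y"
| "qk (x * y) = qre x * qk y + qi x * qj y - qj x * qi y + qk x * qre y"
primcorec inverse_quat where
  "qre (inverse x) = qre x / ((qre x)\<^sup>2 + (qi x)\<^sup>2 + (qj x)\<^sup>2 + (qk x)\<^sup>2)"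
| "qi (inverse x) = - qi x / ((qre x)\<^sup>2 + (qi x)\<^sup>2 + (qj x)\<^sup>2 + (qk x)\<^sup>2)"
| "qj (inverse x) = - qj x / ((qre x)\<^sup>2 + (qi x)\<^sup>2 + (qj x)\<^sup>2 + (qk x)\<^sup>2)"
| "qk (inverse x) = - qk x / ((qre x)\<^sup>2 + (qi x)\<^sup>2 + (qj x)\<^sup>2 + (qk x)\<^sup>2)"
definition "x div y = x * inverse y" for x y :: quat

lemma quat_sumsq_pos:
  "x \<noteq> 0 \<Longrightarrow> (qre x)\<^sup>2 + (qi x)\<^sup>2 + (qj x)\<^sup>2 + (qk x)\<^sup>2 \<noteq> (0::real)"
  by (auto simp: quat_eq_iff add_nonneg_eq_0_iff)

lemma quat_inv1: "x \<noteq> 0 \<Longrightarrow> inverse x * x = (1::quat)"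
proof -
  assume "x \<noteq> 0"
  from quat_sumsq_pos[OF this] have d: "(qre x)\<^sup>2 + (qi x)\<^sup>2 + (qj x)\<^sup>2 + (qk x)\<^sup>2 \<noteq> 0" .
  show ?thesis using d
    apply (simp add: quat_eq_iff)
    apply (simp add: divide_simps)
    apply (simp add: power2_eq_square algebra_simps)
    done
qed

lemma quat_inv2: "x \<noteq> 0 \<Longrightarrow> x * inverse x = (1::quat)"
proof -
  assume "x \<noteq> 0"
  from quat_sumsq_pos[OF this] have d: "(qre x)\<^sup>2 + (qi x)\<^sup>2 + (qj x)\<^sup>2 + (qk x)\<^sup>2 \<noteq> 0" .
  show ?thesis using d
    apply (simp add: quat_eq_iff)
    apply (simp add: divide_simps)
    apply (simp add: power2_eq_square algebra_simps)
    done
qed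

instance
  apply (intro_classes; ((rule quat_inv1 quat_inv2, assumption)+)?)
  apply (simp_all add: quat_eq_iff algebra_simps divide_quat_def)
  done
end

instantiation quat :: real_div_algebra
begin
primcorec scaleR_quat where
  "qre (scaleR r x) = r * qre x" | "qi (scaleR r x) = r * qi x"
| "qj (scaleR r x) = r * qj x" | "qk (scaleR r x) = r * qk x"
instance by standard (simp_all add: quat_eq_iff algebra_simps)
end

instantiation quat :: real_normed_div_algebra
begin
definition norm_quat_def: "norm z = norm (qre z, qi z, qj z, qk z)"
definition sgn_quat_def: "sgn x = x /\<^sub>R norm x" for x :: quat
definition dist_quat_def: "dist x y = norm (x - y)" for x y :: quat
definition uniformity_quat_def:
  "(uniformity :: (quat \<times> quat) filter) = (INF e\<in>{0 <..}. principal {(x, y). dist x y < e})"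
definition open_quat_def:
  "open (U :: quat set) \<longleftrightarrow> (\<forall>x\<in>U. eventually (\<lambda>(x', y). x' = x \<longrightarrow> y \<in> U) uniformity)"

lemma norm_quat_explicit:
  "norm z = sqrt ((qre z)\<^sup>2 + (qi z)\<^sup>2 + (qj z)\<^sup>2 + (qk z)\<^sup>2)"
  by (simp add: norm_quat_def norm_Pair add.assoc)

instance
proof
  fix r :: real and x y :: quat
  show "(norm x = 0) = (x = 0)"
    by (auto simp: norm_quat_def quat_eq_iff zero_prod_def)
  have "norm (x + y) = norm ((qre x, qi x, qj x, qk x) + (qre y, qi y, qj y, qk y))"
    by (simp add: norm_quat_def)
  also have "\<dots> \<le> norm x + norm y" unfolding norm_quat_def by (rule norm_triangle_ineq)
  finally show "norm (x + y) \<le> norm x + norm y" .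
  show "norm (scaleR r x) = \<bar>r\<bar> * norm x"
    by (simp add: norm_quat_explicit power_mult_distrib distrib_left [symmetric] real_sqrt_mult)
  show "norm (x * y) = norm x * norm y"
    by (simp add: norm_quat_explicit real_sqrt_mult [symmetric] power2_eq_square algebra_simps)
qed (rule sgn_quat_def dist_quat_def open_quat_def uniformity_quat_def)+
end


definition qcnj :: "quat \<Rightarrow> quat" where
  "qcnj q = Quat (qre q) (- qi q) (- qj q) (- qk q)"

abbreviation qball :: "quat set" where
  "qball \<equiv> ball 0 1"

definition imag_units :: "quat set" where
  "imag_units = {q. q\<^sup>2 = -1}"

definition cslice :: "quat \<Rightarrow> quat set" where
  "cslice I = {of_real x + of_real y * I | x y. True}"

definition bslice :: "quat \<Rightarrow> quat set" where
  "bslice I = qball \<inter> cslice I"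

text \<open>A power series \<Sum> q^n a_n, with coefficients on the right, is represented by the
  formal power series with coefficients a_n.  The formal power series product is exactly
  the \<star>-product, and the formal power series inverse is the \<star>-inverse.\<close>

definition sr_eval :: "quat fps \<Rightarrow> quat \<Rightarrow> quat" where
  "sr_eval F q = (\<Sum>n. q ^ n * fps_nth F n)"

definition slice_regular :: "(quat \<Rightarrow> quat) \<Rightarrow> bool" where
  "slice_regular f \<longleftrightarrow> (\<exists>F. \<forall>q\<in>qball. (\<lambda>n. q ^ n * fps_nth F n) sums f q)"

definition sr_fps :: "(quat \<Rightarrow> quat) \<Rightarrow> quat fps" where
  "sr_fps f = (SOME F. \<forall>q\<in>qball. (\<lambda>n. q ^ n * fps_nth F n) sums f q)"

definition sr_star :: "(quat \<Rightarrow> quat) \<Rightarrow> (quat \<Rightarrow> quat) \<Rightarrow> quat \<Rightarrow> quat" where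
  "sr_star f g = sr_eval (sr_fps f * sr_fps g)"

definition sr_star_pow :: "(quat \<Rightarrow> quat) \<Rightarrow> nat \<Rightarrow> quat \<Rightarrow> quat" where
  "sr_star_pow f n = sr_eval (sr_fps f ^ n)"

definition sr_comp :: "(quat \<Rightarrow> quat) \<Rightarrow> (quat \<Rightarrow> quat) \<Rightarrow> quat \<Rightarrow> quat" where
  "sr_comp g \<phi> = (\<lambda>q. \<Sum>n. sr_star_pow \<phi> n q * fps_nth (sr_fps g) n)"

text \<open>Regular iterates: sr_iter f n = f^{\<odot>(n+1)}, i.e. sr_iter f 0 = f and
  f^{\<odot>(n+2)} = f \<odot> f^{\<odot>(n+1)}.\<close>
primrec sr_iter :: "(quat \<Rightarrow> quat) \<Rightarrow> nat \<Rightarrow> quat \<Rightarrow> quat" where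
  "sr_iter f 0 = f"
| "sr_iter f (Suc n) = sr_comp f (sr_iter f n)"

definition qAut :: "(quat \<Rightarrow> quat) set" where
  "qAut = {f. slice_regular f \<and> bij_betw f qball qball}"

text \<open>Regular Moebius transformation q \<mapsto> (1 - q a\<bar>)^{-\<star>} \<star> (a - q) u, computed on the
  power series level (q corresponds to fps_X).\<close>
definition reg_mobius :: "quat \<Rightarrow> quat \<Rightarrow> quat \<Rightarrow> quat" where
  "reg_mobius a u = sr_eval (inverse (1 - fps_X * fps_const (qcnj a)) *
                              ((fps_const a - fps_X) * fps_const u))"

definition elliptic :: "(quat \<Rightarrow> quat) \<Rightarrow> bool" where
  "elliptic f \<longleftrightarrow> (\<exists>!q. q \<in> qball \<and> f q = q)"

end

theory Submission
  imports Defs "HOL-Complex_Analysis.Complex_Analysis"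
begin

instance quat :: banach
proof
  fix X :: "nat \<Rightarrow> quat"
  assume c: "Cauchy X"
  let ?Y = "\<lambda>n. (qre (X n), qi (X n), qj (X n), qk (X n))"
  have d: "dist (?Y m) (?Y n) = dist (X m) (X n)" for m n
    by (simp add: dist_norm dist_quat_def norm_quat_def)
  have "Cauchy ?Y" using c unfolding Cauchy_def d .
  then obtain L where L: "?Y \<longlonglongrightarrow> L" using convergent_eq_Cauchy by blast
  obtain r i j k where Lr: "L = (r, i, j, k)" by (cases L) auto
  let ?l = "Quat r i j k"
  have "?Y n = (\<lambda>n. ?Y n) n" for n by simp
  have dd: "dist (X n) ?l = dist (?Y n) L" for n
    by (simp add: dist_quat_def norm_quat_def Lr dist_norm)
  have "X \<longlonglongrightarrow> ?l"
    using L unfolding tendsto_iff dd by simp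
  thus "convergent X" by (auto simp: convergent_def)
qed

definition cq :: "quat \<Rightarrow> complex \<Rightarrow> quat" where
  "cq J z = Re z *\<^sub>R 1 + Im z *\<^sub>R J"

lemma quat_comps:
  "qre (x + y) = qre x + qre y" "qi (x + y) = qi x + qi y" "qj (x + y) = qj x + qj y" "qk (x + y) = qk x + qk y"
  "qre (r *\<^sub>R x) = r * qre x" "qi (r *\<^sub>R x) = r * qi x" "qj (r *\<^sub>R x) = r * qj x" "qk (r *\<^sub>R x) = r * qk x"
  "qre 1 = 1" "qi 1 = 0" "qj 1 = 0" "qk 1 = 0"
  "qre 0 = 0" "qi 0 = 0" "qj 0 = 0" "qk 0 = 0"
  by simp_all

lemma imag_unit_comps:
  assumes "J * J = (-1::quat)"
  shows "qre J = 0" "(qi J)\<^sup>2 + (qj J)\<^sup>2 + (qk J)\<^sup>2 = 1"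
proof -
  have e: "qre (J*J) = -1" "qi (J*J) = 0" "qj (J*J) = 0" "qk (J*J) = 0" using assms by simp_all
  hence e1: "(qre J)\<^sup>2 - (qi J)\<^sup>2 - (qj J)\<^sup>2 - (qk J)\<^sup>2 = -1"
    and e2: "qre J * qi J = 0" "qre J * qj J = 0" "qre J * qk J = 0"
    by (simp_all add: power2_eq_square algebra_simps)
  show r: "qre J = 0"
  proof (rule ccontr)
    assume "qre J \<noteq> 0"
    with e2 have "qi J = 0" "qj J = 0" "qk J = 0" by auto
    with e1 have "(qre J)\<^sup>2 = -1" by simp
    moreover have "(qre J)\<^sup>2 \<ge> 0" by simp
    ultimately show False by linarith
  qed
  show "(qi J)\<^sup>2 + (qj J)\<^sup>2 + (qk J)\<^sup>2 = 1" using e1 r by simp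
qed

lemma norm_imag_unit: "J * J = (-1::quat) \<Longrightarrow> norm J = 1"
  using imag_unit_comps[of J] by (simp add: norm_quat_explicit add.assoc)

lemma cq_comps:
  "qre (cq J z) = Re z + Im z * qre J" "qi (cq J z) = Im z * qi J"
  "qj (cq J z) = Im z * qj J" "qk (cq J z) = Im z * qk J"
  by (simp_all add: cq_def)

lemma cq_add: "cq J (z + w) = cq J z + cq J w"
  by (simp add: cq_def algebra_simps scaleR_left_distrib)
lemma cq_diff: "cq J (z - w) = cq J z - cq J w"
  by (simp add: cq_def algebra_simps scaleR_left_diff_distrib)
lemma cq_uminus: "cq J (- z) = - cq J z"
  by (simp add: cq_def algebra_simps)
lemma cq_zero[simp]: "cq J 0 = 0" by (simp add: cq_def)
lemma cq_one[simp]: "cq J 1 = 1" by (simp add: cq_def)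
lemma cq_of_real[simp]: "cq J (of_real r) = of_real r" by (simp add: cq_def of_real_def)
lemma cq_ii[simp]: "cq J \<i> = J" by (simp add: cq_def)
lemma cq_scaleR: "cq J (r *\<^sub>R z) = r *\<^sub>R cq J z"
  by (simp add: cq_def algebra_simps)

lemma cq_mult:
  assumes "J * J = (-1::quat)"
  shows "cq J (z * w) = cq J z * cq J w"
proof -
  have "cq J z * cq J w = (Re z * Re w) *\<^sub>R 1 + (Re z * Im w + Im z * Re w) *\<^sub>R J + (Im z * Im w) *\<^sub>R (J*J)"
    by (simp add: cq_def algebra_simps scaleR_left_distrib)
  also have "\<dots> = cq J (z * w)" using assms
    by (simp add: cq_def algebra_simps scaleR_left_distrib scaleR_left_diff_distrib)
  finally show ?thesis by simp
qed

lemma cq_power: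
  assumes "J * J = (-1::quat)"
  shows "cq J (z ^ n) = cq J z ^ n"
  by (induction n) (simp_all add: cq_mult[OF assms])

lemma norm_cq:
  assumes "J * J = (-1::quat)"
  shows "norm (cq J z) = norm z"
proof -
  note c = imag_unit_comps[OF assms]
  have "(qre (cq J z))\<^sup>2 + (qi (cq J z))\<^sup>2 + (qj (cq J z))\<^sup>2 + (qk (cq J z))\<^sup>2
      = (Re z)\<^sup>2 + (Im z)\<^sup>2 * ((qi J)\<^sup>2 + (qj J)\<^sup>2 + (qk J)\<^sup>2)"
    by (simp add: cq_comps c power_mult_distrib algebra_simps)
  also have "\<dots> = (Re z)\<^sup>2 + (Im z)\<^sup>2" using c by simp
  finally show ?thesis by (simp add: norm_quat_explicit cmod_def)
qed

lemma cq_inj: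
  assumes "J * J = (-1::quat)" "cq J z = cq J w" shows "z = w"
proof -
  have "norm (cq J (z - w)) = 0" using assms(2) by (simp add: cq_diff)
  thus ?thesis using norm_cq[OF assms(1)] by simp
qed

lemma cq_inverse:
  assumes "J * J = (-1::quat)"
  shows "cq J (inverse z) = inverse (cq J z)"
proof (cases "z = 0")
  case False
  have "cq J z * cq J (inverse z) = 1" using False by (simp add: cq_mult[OF assms, symmetric])
  thus ?thesis by (metis inverse_unique)
qed simp

lemma cq_divide:
  assumes "J * J = (-1::quat)"
  shows "cq J (z / w) = cq J z * inverse (cq J w)"
  by (simp add: divide_inverse cq_mult[OF assms] cq_inverse[OF assms])

lemma bounded_linear_cq: "bounded_linear (cq J)"
  unfolding cq_def
  by (intro bounded_linear_add bounded_linear_compose[OF bounded_linear_scaleR_left bounded_linear_Re]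
      bounded_linear_compose[OF bounded_linear_scaleR_left bounded_linear_Im])

lemma qcnj_cq:
  assumes "J * J = (-1::quat)"
  shows "qcnj (cq J z) = cq J (cnj z)"
  using imag_unit_comps[OF assms] by (simp add: quat_eq_iff qcnj_def cq_comps)

lemma decomp:
  fixes q :: quat
  shows "\<exists>J z. J * J = -1 \<and> q = cq J z \<and> Im z \<ge> 0"
proof -
  let ?v = "Quat 0 (qi q) (qj q) (qk q)"
  let ?r = "norm ?v"
  show ?thesis
  proof (cases "?r = 0")
    case True
    hence v: "qi q = 0" "qj q = 0" "qk q = 0" by (auto simp: quat_eq_iff)
    let ?J = "Quat 0 1 0 0"
    have "?J * ?J = -1" by (simp add: quat_eq_iff)
    moreover have "q = cq ?J (of_real (qre q))" using v by (simp add: quat_eq_iff cq_comps of_real_def)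
    ultimately show ?thesis by (intro exI[of _ ?J] exI[of _ "of_real (qre q)"]) simp
  next
    case False
    hence rp: "?r > 0" by simp
    let ?J = "(1 / ?r) *\<^sub>R ?v"
    have r2: "?r\<^sup>2 = (qi q)\<^sup>2 + (qj q)\<^sup>2 + (qk q)\<^sup>2" by (simp add: norm_quat_explicit)
    have sp: "qi q * qi q + (qj q * qj q + qk q * qk q) > 0"
    proof -
      have "?r * ?r > 0" using rp by simp
      thus ?thesis using r2 by (simp add: power2_eq_square add.assoc)
    qed
    have "?J * ?J = -1"
      using rp r2 sp by (simp add: quat_eq_iff power2_eq_square field_simps)
    moreover have "q = cq ?J (Complex (qre q) ?r)" using rp by (simp add: quat_eq_iff cq_comps)
    ultimately show ?thesis by (intro exI[of _ ?J] exI[of _ "Complex (qre q) ?r"]) simp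
  qed
qed

definition qA :: "quat \<Rightarrow> quat \<Rightarrow> quat" where "qA J I = (1/2) *\<^sub>R (1 - J * I)"
definition qB :: "quat \<Rightarrow> quat \<Rightarrow> quat" where "qB J I = (1/2) *\<^sub>R (1 + J * I)"

lemma half_double: "(1/2::real) *\<^sub>R (x + x) = (x::'a::real_vector)"
  by (simp flip: scaleR_2)

lemma half_plus: "(1/2::real) *\<^sub>R x + (1/2::real) *\<^sub>R x = (x::'a::real_vector)"
  by (simp flip: scaleR_right_distrib add: half_double)

lemma qA_qB_sum: "qA J I + qB J I = 1"
proof -
  have "qA J I + qB J I = (1/2) *\<^sub>R ((1 - J * I) + (1 + J * I))"
    unfolding qA_def qB_def by (rule scaleR_right_distrib[symmetric])
  also have "(1 - J * I) + (1 + J * I) = (1 + 1::quat)" by simp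
  finally show ?thesis by (simp only: half_double)
qed

lemma qAB_combine: "qA J I * x + qB J I * x = x"
  by (simp add: distrib_right[symmetric] qA_qB_sum)

lemma qAB_rep:
  assumes I: "I * I = (-1::quat)"
  shows "qA J I * cq I w + qB J I * cq I (cnj w) = cq J w"
proof -
  have "qA J I * cq I w + qB J I * cq I (cnj w)
      = Re w *\<^sub>R (qA J I + qB J I) + Im w *\<^sub>R ((qA J I - qB J I) * I)"
    by (simp add: cq_def algebra_simps)
  also have "qA J I - qB J I = - (J * I)"
  proof -
    have "qA J I - qB J I = (1/2) *\<^sub>R ((1 - J * I) - (1 + J * I))"
      unfolding qA_def qB_def by (rule scaleR_right_diff_distrib[symmetric])
    also have "(1 - J * I) - (1 + J * I) = - (J * I) + - (J * I)" by simp
    finally show ?thesis by (simp only: half_double)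
  qed
  also have "- (J * I) * I = J" by (simp add: mult.assoc I)
  finally show ?thesis by (simp add: qA_qB_sum cq_def)
qed

lemma qA_I: assumes "I * I = (-1::quat)" shows "qA I I = 1"
proof -
  have "1 - I * I = (1 + 1::quat)" using assms by simp
  thus ?thesis unfolding qA_def by (simp only: half_double)
qed
lemma qB_I: "I * I = (-1::quat) \<Longrightarrow> qB I I = 0" by (simp add: qB_def)

lemma norm_qA: assumes "I * I = (-1::quat)" "J * J = -1" shows "norm (qA J I) \<le> 1"
proof -
  have "norm (1 - J * I) \<le> norm (1::quat) + norm (J * I)" by (rule norm_triangle_ineq4)
  also have "\<dots> = 2" using norm_imag_unit[OF assms(1)] norm_imag_unit[OF assms(2)] by (simp add: norm_mult)
  finally show ?thesis by (simp add: qA_def)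
qed

lemma norm_qB: assumes "I * I = (-1::quat)" "J * J = -1" shows "norm (qB J I) \<le> 1"
proof -
  have "norm (1 + J * I) \<le> norm (1::quat) + norm (J * I)" by (rule norm_triangle_ineq)
  also have "\<dots> = 2" using norm_imag_unit[OF assms(1)] norm_imag_unit[OF assms(2)] by (simp add: norm_mult)
  finally show ?thesis by (simp add: qB_def)
qed

lemma rep_sums:
  assumes I: "I * I = (-1::quat)" and J: "J * J = -1"
    and G: "fps_conv_radius G \<ge> 1" and z: "norm z < 1"
  shows "(\<lambda>n. cq J z ^ n * cq I (fps_nth G n)) sums
           (qA J I * cq I (eval_fps G z) + qB J I * cq I (eval_fps G (cnj z)))"
proof -
  have r1: "ereal (norm z) < fps_conv_radius G" using z G
    by (meson ereal_less(3) less_le_trans one_ereal_def)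
  have r2: "ereal (norm (cnj z)) < fps_conv_radius G" using r1 by simp
  have s1: "(\<lambda>n. cq I (fps_nth G n * z ^ n)) sums cq I (eval_fps G z)"
    by (rule bounded_linear.sums[OF bounded_linear_cq sums_eval_fps[OF r1]])
  have s2: "(\<lambda>n. cq I (fps_nth G n * cnj z ^ n)) sums cq I (eval_fps G (cnj z))"
    by (rule bounded_linear.sums[OF bounded_linear_cq sums_eval_fps[OF r2]])
  have s: "(\<lambda>n. qA J I * cq I (fps_nth G n * z ^ n) + qB J I * cq I (fps_nth G n * cnj z ^ n))
       sums (qA J I * cq I (eval_fps G z) + qB J I * cq I (eval_fps G (cnj z)))"
    by (intro sums_add sums_mult s1 s2)
  have e: "cq J z ^ n * cq I (fps_nth G n) =
        qA J I * cq I (fps_nth G n * z ^ n) + qB J I * cq I (fps_nth G n * cnj z ^ n)" for n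
  proof -
    have "cq J z ^ n = cq J (z ^ n)" by (simp add: cq_power[OF J])
    also have "\<dots> = qA J I * cq I (z ^ n) + qB J I * cq I (cnj z ^ n)"
      using qAB_rep[OF I, of J "z ^ n"] by simp
    finally have "cq J z ^ n * cq I (fps_nth G n) = (qA J I * cq I (z ^ n) + qB J I * cq I (cnj z ^ n)) * cq I (fps_nth G n)"
      by simp
    also have "\<dots> = qA J I * (cq I (z ^ n) * cq I (fps_nth G n)) + qB J I * (cq I (cnj z ^ n) * cq I (fps_nth G n))"
      by (simp add: distrib_right mult.assoc)
    also have "\<dots> = qA J I * cq I (fps_nth G n * z ^ n) + qB J I * cq I (fps_nth G n * cnj z ^ n)"
      by (simp add: cq_mult[OF I, symmetric] mult.commute)
    finally show ?thesis .
  qed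
  show ?thesis using s unfolding e[symmetric] .
qed

definition mobc :: "'a::ring_1 \<Rightarrow> 'a \<Rightarrow> 'a \<Rightarrow> nat \<Rightarrow> 'a" where
  "mobc c a u n = c ^ n * a * u - (if n = 0 then 0 else c ^ (n - 1) * u)"

lemma fps_gp_inverse:
  "inverse (1 - fps_X * fps_const (c::'a::division_ring)) = Abs_fps (\<lambda>n. c ^ n)"
proof (rule fps_inverse_unique)
  show "(1 - fps_X * fps_const c) * Abs_fps (\<lambda>n. c ^ n) = 1"
  proof (rule fps_ext)
    fix n
    show "fps_nth ((1 - fps_X * fps_const c) * Abs_fps (\<lambda>n. c ^ n)) n = fps_nth 1 n"
      by (cases n) (simp_all add: algebra_simps mult.assoc power_commutes)
  qed
qed

lemma fps_mob:
  "inverse (1 - fps_X * fps_const (qcnj a)) * ((fps_const a - fps_X) * fps_const u)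
     = Abs_fps (mobc (qcnj a) a u)"
proof -
  have "(fps_const a - fps_X) * fps_const u = fps_const (a * u) - fps_X * fps_const u"
    by (simp add: algebra_simps)
  hence "inverse (1 - fps_X * fps_const (qcnj a)) * ((fps_const a - fps_X) * fps_const u)
     = Abs_fps (\<lambda>n. qcnj a ^ n) * fps_const (a * u) - Abs_fps (\<lambda>n. qcnj a ^ n) * (fps_X * fps_const u)"
    unfolding fps_gp_inverse by (simp add: right_diff_distrib)
  also have "\<dots> = Abs_fps (mobc (qcnj a) a u)"
    by (rule fps_ext) (simp add: mobc_def mult.assoc[symmetric])
  finally show ?thesis .
qed

lemma mobc_telescope:
  fixes x c a u S :: "'a::real_normed_algebra_1"
  assumes s: "(\<lambda>n. x ^ n * mobc c a u n) sums S" and xc: "x * c = c * x"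
  shows "S - x * c * S = a * u - x * u"
proof -
  have s1: "(\<lambda>n. x ^ Suc n * mobc c a u (Suc n)) sums (S - a * u)"
    using s by (subst sums_Suc_iff) (simp add: mobc_def)
  have s2: "(\<lambda>n. x * c * (x ^ n * mobc c a u n)) sums (x * c * S)"
    by (rule sums_mult[OF s])
  have cp: "c * x ^ n = x ^ n * c" for n
  proof (induction n)
    case (Suc n)
    have "c * x ^ Suc n = (c * x) * x ^ n" by (simp add: mult.assoc)
    also have "\<dots> = x * (c * x ^ n)" by (simp add: xc[symmetric] mult.assoc)
    also have "\<dots> = x ^ Suc n * c" by (simp add: Suc mult.assoc)
    finally show ?case .
  qed simp
  have e: "x ^ Suc n * mobc c a u (Suc n) - x * c * (x ^ n * mobc c a u n)
      = (if n = 0 then - (x * u) else 0)" for n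
  proof -
    have "x * c * (x ^ n * mobc c a u n) = x ^ Suc n * (c * mobc c a u n)"
      by (metis cp mult.assoc power_Suc)
    moreover have "c * mobc c a u n = (if n = 0 then c * a * u else mobc c a u (Suc n))"
      by (cases n) (simp_all add: mobc_def algebra_simps mult.assoc)
    ultimately show ?thesis
    proof (cases n)
      case 0 thus ?thesis by (simp add: mobc_def algebra_simps)
    qed simp
  qed
  have "(\<lambda>n. x ^ Suc n * mobc c a u (Suc n) - x * c * (x ^ n * mobc c a u n))
      sums (S - a * u - x * c * S)" by (rule sums_diff[OF s1 s2])
  also have "(\<lambda>n. x ^ Suc n * mobc c a u (Suc n) - x * c * (x ^ n * mobc c a u n))
        = (\<lambda>n. if n = 0 then - (x * u) else 0)" using e by auto
  finally have "(\<lambda>n. if n = 0 then - (x * u) else 0) sums (S - a * u - x * c * S)" .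
  moreover have "(\<lambda>n::nat. if n = 0 then - (x * u) else 0) sums (- (x * u))"
    using sums_single[of 0 "\<lambda>_. - (x * u)"] by simp
  ultimately have "S - a * u - x * c * S = - (x * u)" using sums_unique2 by blast
  thus ?thesis by (simp add: algebra_simps)
qed

definition fmap :: "quat \<Rightarrow> complex fps \<Rightarrow> quat fps" where
  "fmap J G = Abs_fps (\<lambda>n. cq J (fps_nth G n))"

lemma fmap_nth[simp]: "fps_nth (fmap J G) n = cq J (fps_nth G n)" by (simp add: fmap_def)

lemma cq_sum: "cq J (sum f A) = (\<Sum>x\<in>A. cq J (f x))"
  by (induction A rule: infinite_finite_induct) (simp_all add: cq_add)

lemma fmap_mult: assumes "J * J = (-1::quat)" shows "fmap J (F * G) = fmap J F * fmap J G"
  by (rule fps_ext) (simp add: fps_mult_nth cq_sum cq_mult[OF assms])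

lemma fmap_one: "fmap J 1 = 1"
  by (rule fps_ext) (simp add: fps_one_nth)

lemma fmap_power: assumes "J * J = (-1::quat)" shows "fmap J (F ^ n) = fmap J F ^ n"
  by (induction n) (simp_all add: fmap_one fmap_mult[OF assms])

lemma real_powser_zero:
  fixes d :: "nat \<Rightarrow> real"
  assumes s: "\<And>t. \<bar>t\<bar> < 1 \<Longrightarrow> (\<lambda>n. t ^ n * d n) sums 0"
  shows "d n = 0"
proof -
  define Dc where "Dc = Abs_fps (\<lambda>n. complex_of_real (d n))"
  have sc: "(\<lambda>n. fps_nth Dc n * of_real t ^ n) sums 0" if "\<bar>t\<bar> < 1" for t
  proof -
    have "(\<lambda>n. complex_of_real (t ^ n * d n)) sums of_real 0"
      by (rule bounded_linear.sums[OF bounded_linear_of_real s[OF that]])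
    thus ?thesis by (simp add: Dc_def mult.commute)
  qed
  have conv: "fps_conv_radius Dc \<ge> 1" unfolding fps_conv_radius_def
  proof (rule conv_radius_geI_ex')
    fix r :: real assume "0 < r" "ereal r < 1"
    hence "\<bar>r\<bar> < 1" by simp
    from sc[OF this] show "summable (\<lambda>n. fps_nth Dc n * of_real r ^ n)" by (simp add: sums_iff)
  qed
  have hol: "eval_fps Dc holomorphic_on ball 0 1"
  proof -
    have "ball 0 1 \<subseteq> eball 0 (fps_conv_radius Dc)"
      using conv by (intro ball_eball_mono) (simp add: one_ereal_def)
    thus ?thesis by (rule holomorphic_on_eval_fps)
  qed
  let ?U = "complex_of_real ` {0<..<1}"
  have lim: "0 islimpt ?U"
  proof (rule islimpt_approachable[THEN iffD2], intro allI impI)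
    fix e :: real assume e: "e > 0"
    let ?x = "complex_of_real (min (e/2) (1/2))"
    have "?x \<in> ?U" using e by auto
    moreover have "?x \<noteq> 0" using e by simp
    moreover have "dist ?x 0 < e" using e by simp
    ultimately show "\<exists>x'\<in>?U. x' \<noteq> 0 \<and> dist x' 0 < e" by blast
  qed
  have z: "eval_fps Dc w = 0" if "w \<in> ball 0 1" for w
  proof (rule analytic_continuation[OF hol _ _ _ _ lim _ that])
    show "open (ball (0::complex) 1)" "connected (ball (0::complex) 1)" by simp_all
    show "?U \<subseteq> ball 0 1" by auto
    show "(0::complex) \<in> ball 0 1" by simp
    fix z assume "z \<in> ?U"
    then obtain t where t: "0 < t" "t < 1" "z = of_real t" by auto
    hence "\<bar>t\<bar> < 1" by simp
    from sc[OF this] show "eval_fps Dc z = 0" using t by (simp add: eval_fps_def sums_iff)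
  qed
  have "Dc = 0"
  proof (rule eval_fps_eqD)
    have "(0::ereal) < 1" by simp
    thus "fps_conv_radius Dc > 0" using conv by (rule less_le_trans)
    show "fps_conv_radius (0::complex fps) > 0" by simp
    have "eventually (\<lambda>w. w \<in> ball (0::complex) 1) (nhds 0)" by (intro eventually_nhds_in_open) auto
    thus "eventually (\<lambda>w. eval_fps Dc w = eval_fps 0 w) (nhds 0)"
      by eventually_elim (simp add: z)
  qed
  hence "fps_nth Dc n = 0" by simp
  thus ?thesis by (simp add: Dc_def)
qed

lemma abs_comp_le:
  "\<bar>qre x\<bar> \<le> norm x" "\<bar>qi x\<bar> \<le> norm x" "\<bar>qj x\<bar> \<le> norm x" "\<bar>qk x\<bar> \<le> norm x"
  unfolding norm_quat_explicit by (intro real_le_rsqrt; simp)+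

lemma bl_qre: "bounded_linear qre"
  by (rule bounded_linear_intro[where K=1]) (simp_all add: abs_comp_le)
lemma bl_qi: "bounded_linear qi"
  by (rule bounded_linear_intro[where K=1]) (simp_all add: abs_comp_le)
lemma bl_qj: "bounded_linear qj"
  by (rule bounded_linear_intro[where K=1]) (simp_all add: abs_comp_le)
lemma bl_qk: "bounded_linear qk"
  by (rule bounded_linear_intro[where K=1]) (simp_all add: abs_comp_le)

lemma quat_powser_unique:
  assumes F: "\<forall>q\<in>qball. (\<lambda>n. q ^ n * fps_nth F n) sums h q"
      and G: "\<forall>q\<in>qball. (\<lambda>n. q ^ n * fps_nth G n) sums h q"
  shows "F = G"
proof -
  have s: "(\<lambda>n. (of_real t :: quat) ^ n * (fps_nth F n - fps_nth G n)) sums 0" if "\<bar>t\<bar> < 1" for t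
  proof -
    have "(of_real t :: quat) \<in> qball" using that by simp
    from sums_diff[OF F[rule_format, OF this] G[rule_format, OF this]]
    show ?thesis by (simp add: right_diff_distrib)
  qed
  have e: "(of_real t :: quat) ^ n * x = (t ^ n) *\<^sub>R x" for t n x
    by (simp add: scaleR_conv_of_real)
  have comp: "p (fps_nth F n - fps_nth G n) = 0"
    if bl: "bounded_linear p" and ps: "\<And>r x. p (r *\<^sub>R x) = r * p x" for p :: "quat \<Rightarrow> real" and n
  proof (rule real_powser_zero[of "\<lambda>n. p (fps_nth F n - fps_nth G n)"])
    fix t :: real assume "\<bar>t\<bar> < 1"
    from bounded_linear.sums[OF bl s[OF this]]
    show "(\<lambda>n. t ^ n * p (fps_nth F n - fps_nth G n)) sums 0"
      by (simp add: e ps linear_simps(3)[OF bl])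
  qed
  show ?thesis
  proof (rule fps_ext)
    fix n
    have "qre (fps_nth F n - fps_nth G n) = 0" by (rule comp[OF bl_qre]) simp
    moreover have "qi (fps_nth F n - fps_nth G n) = 0" by (rule comp[OF bl_qi]) simp
    moreover have "qj (fps_nth F n - fps_nth G n) = 0" by (rule comp[OF bl_qj]) simp
    moreover have "qk (fps_nth F n - fps_nth G n) = 0" by (rule comp[OF bl_qk]) simp
    ultimately show "fps_nth F n = fps_nth G n" by (simp add: quat_eq_iff)
  qed
qed

definition mob :: "complex \<Rightarrow> complex \<Rightarrow> complex \<Rightarrow> complex" where
  "mob a u z = u * (a - z) / (1 - cnj a * z)"

lemma norm_sq_complex: "(complex_of_real (norm w))\<^sup>2 = w * cnj w"
  using complex_norm_square[of w] by simp

lemma mob_denom_nz: "norm a < 1 \<Longrightarrow> norm z \<le> 1 \<Longrightarrow> 1 - cnj a * z \<noteq> 0"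
proof
  assume "norm a < 1" "norm z \<le> 1" "1 - cnj a * z = 0"
  hence "cnj a * z = 1" by simp
  hence "norm a * norm z = 1" by (metis complex_mod_cnj norm_mult norm_one)
  moreover have "norm a * norm z < 1" using \<open>norm a < 1\<close> \<open>norm z \<le> 1\<close>
    by (metis mult_le_one norm_ge_zero not_le order.strict_iff_order mult_strict_right_mono mult.commute
        less_le_trans mult_left_le_one_le)
  ultimately show False by simp
qed

lemma mob_key_identity:
  "complex_of_real ((norm (1 - cnj a * z))\<^sup>2 - (norm (a - z))\<^sup>2)
     = complex_of_real ((1 - (norm a)\<^sup>2) * (1 - (norm z)\<^sup>2))"
  by (simp add: norm_sq_complex algebra_simps)

lemma mob_disc:
  assumes a: "norm a < 1" and u: "norm u = 1" and z: "norm z < 1"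
  shows "norm (mob a u z) < 1"
proof -
  have d: "1 - cnj a * z \<noteq> 0" using mob_denom_nz a z by simp
  have "(norm (1 - cnj a * z))\<^sup>2 - (norm (a - z))\<^sup>2 = (1 - (norm a)\<^sup>2) * (1 - (norm z)\<^sup>2)"
    using mob_key_identity[of a z] of_real_eq_iff by blast
  moreover have "(1 - (norm a)\<^sup>2) * (1 - (norm z)\<^sup>2) > 0"
    using a z by (intro mult_pos_pos) (simp_all add: power_less_one_iff abs_square_less_1)
  ultimately have "(norm (a - z))\<^sup>2 < (norm (1 - cnj a * z))\<^sup>2" by simp
  hence "norm (a - z) < norm (1 - cnj a * z)" using power2_less_imp_less by fastforce
  thus ?thesis using d u by (simp add: mob_def norm_mult norm_divide divide_less_eq)
qed

lemma mob_holo: "norm a < 1 \<Longrightarrow> mob a u holomorphic_on ball 0 1"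
  unfolding mob_def using mob_denom_nz[of a] by (intro holomorphic_intros) auto

lemma mob_iter_disc:
  assumes "norm a < 1" "norm u = 1" "norm z < 1"
  shows "norm ((mob a u ^^ n) z) < 1"
  using assms by (induction n) (simp_all add: mob_disc)

lemma mob_iter_holo:
  assumes "norm a < 1" "norm u = 1"
  shows "(mob a u ^^ n) holomorphic_on ball 0 1"
proof (induction n)
  case 0 show ?case by (simp add: holomorphic_on_id id_def)
next
  case (Suc n)
  have "(mob a u \<circ> (mob a u ^^ n)) holomorphic_on ball 0 1"
    by (rule holomorphic_on_compose_gen[OF Suc mob_holo[OF assms(1)]])
       (use mob_iter_disc[OF assms] in auto)
  thus ?case by (simp add: o_def)
qed

definition mobP :: "complex \<Rightarrow> complex \<Rightarrow> complex \<Rightarrow> complex" where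
  "mobP a u z = cnj a * z\<^sup>2 - (1 + u) * z + a * u"

lemma mob_fix_iff:
  assumes "1 - cnj a * z \<noteq> 0"
  shows "mob a u z = z \<longleftrightarrow> mobP a u z = 0"
proof -
  have "mob a u z = z \<longleftrightarrow> u * (a - z) = z * (1 - cnj a * z)"
    using assms by (simp add: mob_def divide_eq_eq)
  also have "\<dots> \<longleftrightarrow> mobP a u z = 0"
    by (simp add: mobP_def power2_eq_square algebra_simps)
  finally show ?thesis .
qed

lemma mobP_roots:
  assumes "a \<noteq> 0"
  shows "\<exists>z1 z2. (\<forall>z. mobP a u z = cnj a * (z - z1) * (z - z2)) \<and> z1 * z2 = a * u / cnj a"
proof -
  define s where "s = csqrt ((1 + u)\<^sup>2 - 4 * cnj a * a * u)"
  have s2: "s\<^sup>2 = (1 + u)\<^sup>2 - 4 * cnj a * a * u" by (simp add: s_def)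
  define z1 where "z1 = ((1 + u) + s) / (2 * cnj a)"
  define z2 where "z2 = ((1 + u) - s) / (2 * cnj a)"
  have ca: "cnj a \<noteq> 0" using assms by simp
  have p: "z1 * z2 = a * u / cnj a"
  proof -
    have "z1 * z2 = ((1 + u)\<^sup>2 - s\<^sup>2) / (4 * cnj a * cnj a)"
      by (simp add: z1_def z2_def power2_eq_square field_simps)
    also have "\<dots> = a * u / cnj a" using ca by (simp add: s2 field_simps)
    finally show ?thesis .
  qed
  have su: "z1 + z2 = (1 + u) / cnj a" using ca by (simp add: z1_def z2_def field_simps)
  have "mobP a u z = cnj a * (z - z1) * (z - z2)" for z
  proof -
    have "cnj a * (z - z1) * (z - z2) = cnj a * z\<^sup>2 - cnj a * (z1 + z2) * z + cnj a * (z1 * z2)"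
      by (simp add: power2_eq_square algebra_simps)
    also have "\<dots> = mobP a u z" using ca by (simp add: su p mobP_def)
    finally show ?thesis by simp
  qed
  with p show ?thesis by blast
qed

lemma mob_conj:
  assumes a: "norm a < 1" and u: "norm u = 1" and t: "norm t = 1" and P: "mobP a u t = 0"
    and z: "1 - cnj a * z \<noteq> 0" "z \<noteq> t"
  shows "mob a u z \<noteq> t"
    and "1 / (mob a u z - t) = ((1 - cnj a * t) / (t * cnj a - u)) / (z - t) + (- cnj a / (t * cnj a - u))"
proof -
  define d where "d = t * cnj a - u"
  have dnz: "d \<noteq> 0"
  proof
    assume "d = 0"
    hence "norm (t * cnj a) = norm u" by (simp add: d_def)
    thus False using a u t by (simp add: norm_mult)
  qed
  have "u * (a - z) - t * (1 - cnj a * z) = d * (z - t) + mobP a u t"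
    by (simp add: d_def mobP_def power2_eq_square algebra_simps)
  hence e: "mob a u z - t = d * (z - t) / (1 - cnj a * z)"
    using z P by (simp add: mob_def field_simps)
  show "mob a u z \<noteq> t"
  proof
    assume "mob a u z = t"
    with e have "d * (z - t) / (1 - cnj a * z) = 0" by simp
    thus False using dnz z by simp
  qed
  have "1 / (mob a u z - t) = (1 - cnj a * z) / (d * (z - t))" using e by simp
  also have "\<dots> = ((1 - cnj a * t) / d) / (z - t) + (- cnj a / d)"
    using dnz z by (simp add: field_simps)
  finally show "1 / (mob a u z - t) = ((1 - cnj a * t) / (t * cnj a - u)) / (z - t) + (- cnj a / (t * cnj a - u))"
    by (simp add: d_def)
qed

lemma hp_iff: "Re w < - 1/2 \<longleftrightarrow> norm (w + 1) < norm w"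
proof -
  have "(norm (w + 1))\<^sup>2 = (norm w)\<^sup>2 + 2 * Re w + 1"
    by (simp only: cmod_power2) (simp add: power2_eq_square algebra_simps)
  have "norm (w + 1) < norm w \<longleftrightarrow> (norm (w + 1))\<^sup>2 < (norm w)\<^sup>2"
  proof
    assume "norm (w + 1) < norm w" thus "(norm (w + 1))\<^sup>2 < (norm w)\<^sup>2"
      by (rule power_strict_mono) auto
  next
    assume "(norm (w + 1))\<^sup>2 < (norm w)\<^sup>2" thus "norm (w + 1) < norm w"
      by (rule power2_less_imp_less) simp
  qed
  thus ?thesis using \<open>(norm (w + 1))\<^sup>2 = _\<close> by auto
qed

lemma hp1:
  assumes t: "norm t = 1" and z: "norm z < 1"
  shows "Re (t / (z - t)) < - 1/2"
proof -
  have zt: "z - t \<noteq> 0" using t z by auto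
  have "t / (z - t) + 1 = z / (z - t)" using zt by (simp add: field_simps)
  hence "norm (t / (z - t) + 1) = norm z / norm (z - t)" by (simp add: norm_divide)
  also have "\<dots> < 1 / norm (z - t)" using z zt by (simp add: divide_strict_right_mono)
  also have "\<dots> = norm (t / (z - t))" using t by (simp add: norm_divide)
  finally show ?thesis using hp_iff by blast
qed

lemma hp2:
  assumes t: "norm t = 1" and w: "Re w < - 1/2"
  shows "norm (t + t / w) < 1" "t + t / w \<noteq> t" "t / ((t + t / w) - t) = w"
proof -
  have wnz: "w \<noteq> 0" using w by auto
  have tnz: "t \<noteq> 0" using t by auto
  have "t + t / w = t * ((w + 1) / w)" using wnz by (simp add: field_simps)
  hence "norm (t + t / w) = norm (w + 1) / norm w" using t by (simp add: norm_mult norm_divide)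
  also have "\<dots> < 1" using hp_iff[of w] w wnz by simp
  finally show "norm (t + t / w) < 1" .
  show "t + t / w \<noteq> t" using wnz tnz by simp
  show "t / ((t + t / w) - t) = w" using wnz tnz by simp
qed

lemma aff_hp:
  fixes m c :: complex
  assumes h: "\<And>w. Re w < - 1/2 \<Longrightarrow> Re (m * w + c) < - 1/2"
  shows "Im m = 0" "Re m \<ge> 0"
proof -
  show im: "Im m = 0"
  proof (rule ccontr)
    assume nz: "Im m \<noteq> 0"
    define y where "y = - (\<bar>Re m\<bar> + \<bar>Re c\<bar> + 1) / Im m"
    have "Re (m * Complex (-1) y + c) < - 1/2" by (rule h) simp
    moreover have "Re (m * Complex (-1) y + c) = - Re m + (\<bar>Re m\<bar> + \<bar>Re c\<bar> + 1) + Re c"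
      using nz by (simp add: y_def field_simps)
    ultimately show False by linarith
  qed
  show "Re m \<ge> 0"
  proof (rule ccontr)
    assume neg: "\<not> Re m \<ge> 0"
    define t where "t = (\<bar>Re c\<bar> + 1) / (- Re m) + 1"
    have "(\<bar>Re c\<bar> + 1) / (- Re m) > 0" using neg by (intro divide_pos_pos) auto
    hence tpos: "t > 1" by (simp add: t_def)
    have "Re (m * of_real (- t) + c) < - 1/2" by (rule h) (use tpos in simp)
    moreover have "Re (m * of_real (- t) + c) = - Re m * t + Re c" using im by simp
    moreover have "- Re m * t = (\<bar>Re c\<bar> + 1) + (- Re m)" using neg by (simp add: t_def field_simps)
    ultimately show False using neg by linarith
  qed
qed

locale mobfix =
  fixes a u t :: complex
  assumes a: "norm a < 1" and u: "norm u = 1" and t: "norm t = 1" and P: "mobP a u t = 0"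
begin

definition "d = t * cnj a - u"
definition "mu = (1 - cnj a * t) / d"
definition "nu = - cnj a / d"

lemma d_nz: "d \<noteq> 0"
proof
  assume "d = 0"
  hence "norm (t * cnj a) = norm u" by (simp add: d_def)
  thus False using a u t by (simp add: norm_mult)
qed

lemma mu_nz: "mu \<noteq> 0"
  using mob_denom_nz[OF a, of t] t d_nz by (simp add: mu_def)

lemma nu_nz: "a \<noteq> 0 \<Longrightarrow> nu \<noteq> 0"
  using d_nz by (simp add: nu_def)

lemma conjS:
  assumes "1 - cnj a * z \<noteq> 0" "z \<noteq> t"
  shows "mob a u z \<noteq> t" "1 / (mob a u z - t) = mu / (z - t) + nu"
  using mob_conj[OF a u t P assms] by (simp_all add: mu_def nu_def d_def)

lemma disc_ok:
  assumes "norm z < 1" shows "1 - cnj a * z \<noteq> 0" "z \<noteq> t"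
  using mob_denom_nz[OF a, of z] assms t by auto

lemma iter_formula:
  assumes z: "norm z < 1"
  shows "1 / ((mob a u ^^ n) z - t) = mu ^ n / (z - t) + nu * (\<Sum>k<n. mu ^ k)"
proof (induction n)
  case 0 thus ?case by simp
next
  case (Suc n)
  define y where "y = (mob a u ^^ n) z"
  have y: "norm y < 1" using mob_iter_disc[OF a u z] by (simp add: y_def)
  have "1 / ((mob a u ^^ Suc n) z - t) = 1 / (mob a u y - t)" by (simp add: y_def)
  also have "\<dots> = mu * (1 / (y - t)) + nu" using conjS[OF disc_ok[OF y]] by simp
  also have "1 / (y - t) = mu ^ n / (z - t) + nu * (\<Sum>k<n. mu ^ k)" using Suc by (simp add: y_def)
  also have "mu * (mu ^ n / (z - t) + nu * (\<Sum>k<n. mu ^ k)) + nu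
      = mu ^ Suc n / (z - t) + nu * (1 + mu * (\<Sum>k<n. mu ^ k))"
    by (simp add: algebra_simps)
  also have "1 + mu * (\<Sum>k<n. mu ^ k) = (\<Sum>k<Suc n. mu ^ k)"
  proof -
    have "(\<Sum>k<Suc n. mu ^ k) = mu ^ 0 + (\<Sum>k<n. mu ^ Suc k)" by (rule sum.lessThan_Suc_shift)
    also have "(\<Sum>k<n. mu ^ Suc k) = mu * (\<Sum>k<n. mu ^ k)" by (simp add: sum_distrib_left)
    finally show ?thesis by simp
  qed
  finally show ?case .
qed

lemma mu_real_pos: "Im mu = 0" "Re mu > 0"
proof -
  have h: "Re (mu * w + t * nu) < - 1/2" if w: "Re w < - 1/2" for w
  proof -
    define z where "z = t + t / w"
    have z1: "norm z < 1" "z \<noteq> t" "t / (z - t) = w" using hp2[OF t w] by (simp_all add: z_def)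
    have gz: "norm (mob a u z) < 1" by (rule mob_disc[OF a u z1(1)])
    have "Re (t / (mob a u z - t)) < - 1/2" by (rule hp1[OF t gz])
    also have "t / (mob a u z - t) = t * (1 / (mob a u z - t))" by simp
    also have "\<dots> = mu * (t / (z - t)) + t * nu" using conjS[OF disc_ok[OF z1(1)]] by (simp add: algebra_simps)
    finally show ?thesis using z1 by simp
  qed
  from aff_hp[OF h] show "Im mu = 0" by simp
  from aff_hp[OF h] mu_nz show "Re mu > 0" by (simp add: complex_eq_iff)
qed

lemma mu_real: "mu = of_real (Re mu)"
  using mu_real_pos by (simp add: complex_eq_iff)

lemma fixed_from_S:
  assumes "1 - cnj a * z \<noteq> 0" "z \<noteq> t" "1 / (z - t) = w0" "w0 * (1 - mu) = nu"
  shows "mob a u z = z"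
proof -
  have "1 / (mob a u z - t) = mu * (1 / (z - t)) + nu" using conjS[OF assms(1,2)] by simp
  hence "1 / (mob a u z - t) = mu * w0 + nu" using assms(3) by simp
  also have "\<dots> = w0" using assms(4) by (simp add: algebra_simps)
  finally have "1 / (mob a u z - t) = 1 / (z - t)" using assms(3) by simp
  thus ?thesis using assms(2) conjS(1)[OF assms(1,2)] by (simp add: field_simps)
qed

end

lemma gp_rearr: "(p::complex) / y + nu * ((1 - p) / q) = p * (1 / y - nu / q) + nu / q"
  by (simp add: algebra_simps diff_divide_distrib)

lemma inv_big_small:
  fixes x :: complex
  assumes "norm (1 / x) > 1 / e" "e > 0"
  shows "norm x < e"
proof (cases "x = 0")
  case True thus ?thesis using assms by simp
next
  case False
  hence "1 / norm x > 1 / e" using assms by (simp add: norm_divide)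
  thus ?thesis using False assms by (simp add: divide_less_eq field_simps)
qed

context mobfix
begin

definition "w0 = nu / (1 - mu)"
definition "zs = t + 1 / w0"

lemma star_facts:
  assumes nofix: "\<forall>z. norm z < 1 \<longrightarrow> mob a u z \<noteq> z" and an: "a \<noteq> 0" and m1: "mu \<noteq> 1"
  shows "w0 \<noteq> 0" "zs \<noteq> t" "1 / (zs - t) = w0" "w0 * (1 - mu) = nu" "norm zs \<ge> 1"
proof -
  show w: "w0 \<noteq> 0" using nu_nz[OF an] m1 by (simp add: w0_def)
  show "zs \<noteq> t" using w by (simp add: zs_def)
  show "1 / (zs - t) = w0" by (simp add: zs_def)
  show wm: "w0 * (1 - mu) = nu" using m1 by (simp add: w0_def)
  show "norm zs \<ge> 1"
  proof (rule ccontr)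
    assume "\<not> norm zs \<ge> 1"
    hence zs1: "norm zs < 1" by simp
    have "mob a u zs = zs"
      by (rule fixed_from_S[OF disc_ok[OF zs1] _ wm]) (simp add: zs_def)
    with nofix zs1 show False by blast
  qed
qed

lemma S_bound:
  assumes r: "r < 1" and z: "norm z \<le> r"
  shows "norm (1 / (z - t)) \<le> 1 / (1 - r)"
proof -
  have "norm (z - t) \<ge> norm t - norm z" by (metis norm_minus_commute norm_triangle_ineq2)
  hence zt: "norm (z - t) \<ge> 1 - r" using t z by simp
  have "1 - r > 0" using r by simp
  thus ?thesis using zt by (simp add: norm_divide frac_le)
qed

lemma conv_ge1:
  assumes nofix: "\<forall>z. norm z < 1 \<longrightarrow> mob a u z \<noteq> z" and an: "a \<noteq> 0" and m1: "Re mu \<ge> 1"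
    and r: "r < 1" and e: "e > 0"
  shows "\<exists>N. \<forall>n\<ge>N. \<forall>z. norm z \<le> r \<longrightarrow> norm ((mob a u ^^ n) z - t) < e"
proof -
  define m where "m = Re mu"
  have mu_m: "mu = of_real m" using mu_real by (simp add: m_def)
  have rpos: "1 - r > 0" using r by simp
  show ?thesis
  proof (cases "m = 1")
    case True
    hence mu1: "mu = 1" using mu_m by simp
    define K where "K = 1 / (1 - r) + 1 / e + 1"
    have nun: "norm nu > 0" using nu_nz[OF an] by simp
    define N where "N = nat \<lceil>K / norm nu\<rceil>"
    have "\<forall>n\<ge>N. \<forall>z. norm z \<le> r \<longrightarrow> norm ((mob a u ^^ n) z - t) < e"
    proof (intro allI impI)
      fix n :: nat and z :: complex assume n: "n \<ge> N" and z: "norm z \<le> r"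
      have z1: "norm z < 1" using z r by simp
      have f: "1 / ((mob a u ^^ n) z - t) = 1 / (z - t) + nu * of_nat n"
        using iter_formula[OF z1, of n] mu1 by simp
      have "K / norm nu \<le> real n" using n by (simp add: N_def)
      hence Kn: "K \<le> norm nu * real n" using nun by (simp add: divide_le_eq mult.commute)
      have "norm (nu * of_nat n) - norm (1 / (z - t)) \<le> norm (1 / (z - t) + nu * of_nat n)"
        by (metis add.commute norm_diff_ineq)
      moreover have "norm (nu * of_nat n) = norm nu * real n" by (simp add: norm_mult)
      moreover note S_bound[OF r z]
      ultimately have "norm (1 / (z - t) + nu * of_nat n) \<ge> K - 1 / (1 - r)" using Kn by linarith
      hence "norm (1 / ((mob a u ^^ n) z - t)) \<ge> K - 1 / (1 - r)" by (simp only: f)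
      hence "norm (1 / ((mob a u ^^ n) z - t)) > 1 / e" by (simp add: K_def)
      thus "norm ((mob a u ^^ n) z - t) < e" using inv_big_small e by blast
    qed
    thus ?thesis by blast
  next
    case False
    hence mgt: "m > 1" using m1 by (simp add: m_def)
    have mu1: "mu \<noteq> 1" using False mu_m by auto
    note sf = star_facts[OF nofix an mu1]
    define delta where "delta = (1 - r) / (2 * norm (zs - t))"
    have zst: "norm (zs - t) > 0" using sf by simp
    have dpos: "delta > 0" using rpos zst by (simp add: delta_def)
    have low: "norm (1 / (z - t) - w0) \<ge> delta" if z: "norm z \<le> r" for z
    proof -
      have z1: "norm z < 1" using z r by simp
      have zt: "z \<noteq> t" using disc_ok[OF z1] by simp
      have zt': "z - t \<noteq> 0" "zs - t \<noteq> 0" using zt sf(2) by auto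
      have "1 / (z - t) - 1 / (zs - t) = (zs - z) / ((z - t) * (zs - t))"
        using zt' by (simp add: diff_frac_eq)
      hence "1 / (z - t) - w0 = (zs - z) / ((z - t) * (zs - t))" using sf(3) by simp
      hence eq: "norm (1 / (z - t) - w0) = norm (zs - z) / (norm (z - t) * norm (zs - t))"
        by (simp add: norm_divide norm_mult)
      have "norm (zs - z) \<ge> norm zs - norm z" by (rule norm_triangle_ineq2)
      hence n1: "norm (zs - z) \<ge> 1 - r" using sf(5) z by simp
      have "norm (z - t) \<le> norm z + norm t" by (rule norm_triangle_ineq4)
      hence n2: "norm (z - t) \<le> 2" using z r t by simp
      have n3: "norm (z - t) > 0" using zt by simp
      have "(1 - r) / (2 * norm (zs - t)) \<le> norm (zs - z) / (norm (z - t) * norm (zs - t))"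
        by (rule frac_le) (use rpos n1 n2 n3 zst in \<open>simp_all add: mult_pos_pos mult_right_mono\<close>)
      thus ?thesis using eq by (simp add: delta_def)
    qed
    obtain N where N: "(norm w0 + 1 / e + 1) / delta < m ^ N" using real_arch_pow[OF mgt] by blast
    have "\<forall>n\<ge>N. \<forall>z. norm z \<le> r \<longrightarrow> norm ((mob a u ^^ n) z - t) < e"
    proof (intro allI impI)
      fix n :: nat and z :: complex assume n: "n \<ge> N" and z: "norm z \<le> r"
      have z1: "norm z < 1" using z r by simp
      have sum: "(\<Sum>k<n. mu ^ k) = (1 - mu ^ n) / (1 - mu)" using mu1 by (simp add: sum_gp_strict)
      have f: "1 / ((mob a u ^^ n) z - t) = mu ^ n * (1 / (z - t) - w0) + w0"
        using iter_formula[OF z1, of n] unfolding sum w0_def gp_rearr by simp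
      have mn: "m ^ n \<ge> m ^ N" using mgt n by (simp add: power_increasing)
      have "norm (mu ^ n * (1 / (z - t) - w0)) = m ^ n * norm (1 / (z - t) - w0)"
        using mu_m mgt by (simp add: norm_mult norm_power)
      also have "\<dots> \<ge> m ^ N * delta"
        by (rule mult_mono) (use mn low[OF z] dpos mgt in auto)
      finally have a1: "norm (mu ^ n * (1 / (z - t) - w0)) \<ge> m ^ N * delta" .
      have "m ^ N * delta > norm w0 + 1 / e + 1" using N dpos by (simp add: divide_less_eq)
      moreover have "norm (mu ^ n * (1 / (z - t) - w0) + w0) \<ge> norm (mu ^ n * (1 / (z - t) - w0)) - norm w0"
        by (rule norm_diff_ineq)
      ultimately have "norm (mu ^ n * (1 / (z - t) - w0) + w0) > 1 / e" using a1 by linarith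
      hence "norm (1 / ((mob a u ^^ n) z - t)) > 1 / e" by (simp only: f)
      thus "norm ((mob a u ^^ n) z - t) < e" using inv_big_small e by blast
    qed
    thus ?thesis by blast
  qed
qed

lemma conv_lt1:
  assumes nofix: "\<forall>z. norm z < 1 \<longrightarrow> mob a u z \<noteq> z" and an: "a \<noteq> 0" and m1: "Re mu < 1"
  shows "\<exists>t'. mobP a u t' = 0 \<and> norm t' = 1 \<and> t' \<noteq> t \<and> (\<lambda>n. (mob a u ^^ n) 0) \<longlonglongrightarrow> t'"
proof -
  define m where "m = Re mu"
  have mu_m: "mu = of_real m" using mu_real by (simp add: m_def)
  have mpos: "m > 0" using mu_real_pos by (simp add: m_def)
  have m1': "m < 1" using m1 by (simp add: m_def)
  have mu1: "mu \<noteq> 1" using m1' mu_m by auto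
  note sf = star_facts[OF nofix an mu1]
  have f: "1 / ((mob a u ^^ n) 0 - t) = mu ^ n * (1 / (0 - t) - w0) + w0" for n
  proof -
    have sum: "(\<Sum>k<n. mu ^ k) = (1 - mu ^ n) / (1 - mu)" using mu1 by (simp add: sum_gp_strict)
    show ?thesis using iter_formula[of 0 n] unfolding sum w0_def gp_rearr by simp
  qed
  have nm: "norm mu < 1" using mu_m mpos m1' by simp
  have "(\<lambda>n. mu ^ n) \<longlonglongrightarrow> 0" using LIMSEQ_power_zero[OF nm] by simp
  hence "(\<lambda>n. mu ^ n * (1 / (0 - t) - w0) + w0) \<longlonglongrightarrow> 0 * (1 / (0 - t) - w0) + w0"
    by (intro tendsto_intros) (use nm in auto)
  hence l1: "(\<lambda>n. 1 / ((mob a u ^^ n) 0 - t)) \<longlonglongrightarrow> w0" unfolding f by simp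
  have "(\<lambda>n. 1 / (1 / ((mob a u ^^ n) 0 - t))) \<longlonglongrightarrow> 1 / w0"
    by (rule tendsto_divide[OF tendsto_const l1 sf(1)])
  hence "(\<lambda>n. t + ((mob a u ^^ n) 0 - t)) \<longlonglongrightarrow> t + 1 / w0"
    by (intro tendsto_intros) simp
  hence lim: "(\<lambda>n. (mob a u ^^ n) 0) \<longlonglongrightarrow> zs" by (simp add: zs_def)
  have "norm zs \<le> 1"
  proof (rule LIMSEQ_le_const2[OF tendsto_norm[OF lim]])
    show "\<exists>N. \<forall>n\<ge>N. norm ((mob a u ^^ n) 0) \<le> 1"
      using mob_iter_disc[OF a u, of 0] by (auto intro: less_imp_le)
  qed
  hence zs1: "norm zs = 1" using sf(5) by simp
  have dn: "1 - cnj a * zs \<noteq> 0" using mob_denom_nz[OF a] zs1 by simp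
  have "mob a u zs = zs" by (rule fixed_from_S[OF dn sf(2) sf(3) sf(4)])
  hence "mobP a u zs = 0" using mob_fix_iff[OF dn] by simp
  thus ?thesis using zs1 sf(2) lim by blast
qed

end

definition dw_prop :: "complex \<Rightarrow> complex \<Rightarrow> complex \<Rightarrow> bool" where
  "dw_prop a u t \<longleftrightarrow> norm t = 1 \<and> mob a u t = t \<and>
     (\<forall>r<1. \<forall>e>0. \<exists>N. \<forall>n\<ge>N. \<forall>z. norm z \<le> r \<longrightarrow> norm ((mob a u ^^ n) z - t) < e)"

lemma dw_step:
  assumes a: "norm a < 1" and u: "norm u = 1" and nofix: "\<forall>z. norm z < 1 \<longrightarrow> mob a u z \<noteq> z"
    and an: "a \<noteq> 0" and t: "norm t = 1" and P: "mobP a u t = 0"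
  shows "dw_prop a u t \<or> (\<exists>t'. mobP a u t' = 0 \<and> norm t' = 1 \<and> t' \<noteq> t \<and> (\<lambda>n. (mob a u ^^ n) 0) \<longlonglongrightarrow> t')"
proof -
  interpret mobfix a u t using a u t P by unfold_locales
  show ?thesis
  proof (cases "Re mu \<ge> 1")
    case True
    have dn: "1 - cnj a * t \<noteq> 0" using mob_denom_nz[OF a] t by simp
    have "mob a u t = t" using mob_fix_iff[OF dn] P by simp
    thus ?thesis using conv_ge1[OF nofix an True] t unfolding dw_prop_def by blast
  next
    case False
    thus ?thesis using conv_lt1[OF nofix an] by simp
  qed
qed

theorem mob_dw:
  assumes a: "norm a < 1" and u: "norm u = 1" and nofix: "\<forall>z. norm z < 1 \<longrightarrow> mob a u z \<noteq> z"
  shows "\<exists>t. dw_prop a u t"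
proof -
  have an: "a \<noteq> 0"
  proof
    assume "a = 0"
    hence "mob a u 0 = 0" by (simp add: mob_def)
    with nofix show False by auto
  qed
  obtain z1 z2 where fac: "\<forall>z. mobP a u z = cnj a * (z - z1) * (z - z2)" and pr: "z1 * z2 = a * u / cnj a"
    using mobP_roots[OF an] by blast
  have root_out: "norm z \<ge> 1" if "mobP a u z = 0" for z
  proof (rule ccontr)
    assume "\<not> norm z \<ge> 1"
    hence z: "norm z < 1" by simp
    have "1 - cnj a * z \<noteq> 0" using mob_denom_nz[OF a] z by simp
    hence "mob a u z = z" using mob_fix_iff that by simp
    with nofix z show False by blast
  qed
  have P1: "mobP a u z1 = 0" "mobP a u z2 = 0" using fac by simp_all
  have n1: "norm z1 \<ge> 1" "norm z2 \<ge> 1" using root_out P1 by auto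
  have "norm (a * u / cnj a) = 1" using an u by (simp add: norm_mult norm_divide)
  hence "norm z1 * norm z2 = 1" using pr by (simp add: norm_mult[symmetric])
  hence "norm z1 \<le> 1" using n1
    by (metis mult_le_cancel_left1 norm_ge_zero order_trans zero_less_one_class.zero_le_one linorder_not_le
        mult.commute mult_less_cancel_left2 order.strict_iff_order)
  hence t1: "norm z1 = 1" using n1 by simp
  show ?thesis
  proof (cases "dw_prop a u z1")
    case True thus ?thesis by blast
  next
    case False
    then obtain t2 where t2: "mobP a u t2 = 0" "norm t2 = 1" "t2 \<noteq> z1" "(\<lambda>n. (mob a u ^^ n) 0) \<longlonglongrightarrow> t2"
      using dw_step[OF a u nofix an t1 P1(1)] by blast
    show ?thesis
    proof (cases "dw_prop a u t2")
      case True thus ?thesis by blast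
    next
      case False
      then obtain t3 where t3: "t3 \<noteq> t2" "(\<lambda>n. (mob a u ^^ n) 0) \<longlonglongrightarrow> t3"
        using dw_step[OF a u nofix an t2(2) t2(1)] by blast
      from LIMSEQ_unique[OF t2(4) t3(2)] t3(1) show ?thesis by simp
    qed
  qed
qed

definition Gm :: "complex \<Rightarrow> complex \<Rightarrow> complex fps" where
  "Gm a u = Abs_fps (mobc (cnj a) a u)"

lemma mobc_bound:
  assumes a: "norm a < 1" and u: "norm u = 1"
  shows "norm (mobc (cnj a) a u (Suc n)) \<le> 2 * norm a ^ n"
proof -
  have "norm (mobc (cnj a) a u (Suc n)) \<le> norm (cnj a ^ Suc n * a * u) + norm (cnj a ^ n * u)"
    by (simp add: mobc_def norm_triangle_ineq4)
  also have "norm (cnj a ^ Suc n * a * u) = norm a ^ Suc n * norm a" using u by (simp add: norm_mult norm_power)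
  also have "norm (cnj a ^ n * u) = norm a ^ n" using u by (simp add: norm_mult norm_power)
  also have "norm a ^ Suc n * norm a \<le> norm a ^ n"
  proof -
    have "norm a ^ Suc n * norm a = norm a ^ n * (norm a * norm a)" by (simp add: algebra_simps)
    also have "\<dots> \<le> norm a ^ n * 1" using a
      by (intro mult_left_mono) (simp_all add: mult_le_one less_imp_le)
    finally show ?thesis by simp
  qed
  finally show ?thesis by simp
qed

lemma Gm_conv:
  assumes a: "norm a < 1" and u: "norm u = 1"
  shows "fps_conv_radius (Gm a u) > 1"
proof -
  define \<rho> where "\<rho> = 2 / (1 + norm a)"
  have ap: "1 + norm a > 0" by (simp add: add_pos_nonneg)
  have rho1: "\<rho> > 1" using a ap by (simp add: \<rho>_def less_divide_eq)
  have rpos: "\<rho> > 0" using rho1 by simp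
  have ar: "norm a * \<rho> < 1" using a ap by (simp add: \<rho>_def divide_less_eq)
  have "summable (\<lambda>n. norm (fps_nth (Gm a u) (Suc n) * of_real \<rho> ^ Suc n))"
  proof (rule summable_comparison_test)
    show "\<exists>N. \<forall>n\<ge>N. norm (norm (fps_nth (Gm a u) (Suc n) * of_real \<rho> ^ Suc n)) \<le> 2 * \<rho> * (norm a * \<rho>) ^ n"
    proof (intro exI allI impI)
      fix n :: nat
      have "norm (norm (fps_nth (Gm a u) (Suc n) * of_real \<rho> ^ Suc n))
          = norm (mobc (cnj a) a u (Suc n)) * \<rho> ^ Suc n"
        using rpos by (simp add: Gm_def norm_mult norm_power)
      also have "\<dots> \<le> 2 * norm a ^ n * \<rho> ^ Suc n"
        by (rule mult_right_mono[OF mobc_bound[OF a u]]) (use rpos in simp)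
      also have "\<dots> = 2 * \<rho> * (norm a * \<rho>) ^ n" by (simp add: power_mult_distrib)
      finally show "norm (norm (fps_nth (Gm a u) (Suc n) * of_real \<rho> ^ Suc n)) \<le> 2 * \<rho> * (norm a * \<rho>) ^ n" .
    qed
    show "summable (\<lambda>n. 2 * \<rho> * (norm a * \<rho>) ^ n)"
    proof -
      have "0 \<le> norm a * \<rho>" using rpos by simp
      thus ?thesis using ar by (intro summable_mult summable_geometric) simp
    qed
  qed
  hence "summable (\<lambda>n. norm (fps_nth (Gm a u) n * of_real \<rho> ^ n))" by (subst summable_Suc_iff[symmetric])
  hence "summable (\<lambda>n. fps_nth (Gm a u) n * of_real \<rho> ^ n)" by (rule summable_norm_cancel)
  hence "fps_conv_radius (Gm a u) \<ge> norm (of_real \<rho> :: complex)"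
    unfolding fps_conv_radius_def by (rule conv_radius_geI)
  hence "fps_conv_radius (Gm a u) \<ge> ereal \<rho>" using rpos by simp
  moreover have "ereal 1 < ereal \<rho>" using rho1 by simp
  ultimately have "ereal 1 < fps_conv_radius (Gm a u)" by (rule less_le_trans[rotated])
  thus ?thesis by (simp add: one_ereal_def)
qed

lemma Gm_conv1:
  assumes a: "norm a < 1" and u: "norm u = 1"
  shows "fps_conv_radius (Gm a u) \<ge> 1"
  using Gm_conv[OF a u] by simp

lemma Gm_sums:
  assumes a: "norm a < 1" and u: "norm u = 1" and z: "norm z \<le> 1"
  shows "(\<lambda>n. fps_nth (Gm a u) n * z ^ n) sums mob a u z"
proof -
  have "ereal (norm z) \<le> 1" using z by (simp add: one_ereal_def)
  hence zr: "ereal (norm z) < fps_conv_radius (Gm a u)"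
    using Gm_conv[OF a u] by (rule le_less_trans)
  have s: "(\<lambda>n. fps_nth (Gm a u) n * z ^ n) sums eval_fps (Gm a u) z" by (rule sums_eval_fps[OF zr])
  define S where "S = eval_fps (Gm a u) z"
  have s': "(\<lambda>n. z ^ n * mobc (cnj a) a u n) sums S"
    using s by (simp add: S_def Gm_def mult.commute)
  have "S - z * cnj a * S = a * u - z * u"
    by (rule mobc_telescope[OF s']) simp
  hence "S * (1 - cnj a * z) = u * (a - z)" by (simp add: algebra_simps)
  moreover have "1 - cnj a * z \<noteq> 0" using mob_denom_nz[OF a z] .
  ultimately have "S = mob a u z" by (simp add: mob_def field_simps)
  thus ?thesis using s by (simp add: S_def)
qed

lemma Gm_eval:
  assumes a: "norm a < 1" and u: "norm u = 1" and z: "norm z \<le> 1"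
  shows "eval_fps (Gm a u) z = mob a u z"
  using Gm_sums[OF assms] by (simp add: eval_fps_def sums_iff)

lemma Gm_nsum:
  assumes a: "norm a < 1" and u: "norm u = 1"
  shows "summable (\<lambda>n. real n * norm (fps_nth (Gm a u) n))"
proof -
  have cr: "ereal (norm (1::complex)) < fps_conv_radius (fps_deriv (Gm a u))"
    using less_le_trans[OF Gm_conv[OF a u] fps_conv_radius_deriv[of "Gm a u"]] by (simp add: one_ereal_def)
  have e: "\<And>n. cmod (1 + complex_of_nat n) = 1 + real n" 
    using norm_of_nat by (metis of_nat_Suc of_nat_add of_nat_1 add.commute)
  from norm_summable_fps[OF cr]
  have "summable (\<lambda>n. real (Suc n) * norm (fps_nth (Gm a u) (Suc n)))"
    by (simp add: norm_mult e)
  thus ?thesis by (subst summable_Suc_iff[symmetric]) simp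
qed

lemma rep2:
  assumes I: "I * I = (-1::quat)"
    and s1: "(\<lambda>k. fps_nth G k * w1 ^ k) sums S1" and s2: "(\<lambda>k. fps_nth G k * w2 ^ k) sums S2"
  shows "(\<lambda>k. (A * cq I (w1 ^ k) + B * cq I (w2 ^ k)) * cq I (fps_nth G k)) sums (A * cq I S1 + B * cq I S2)"
proof -
  have t1: "(\<lambda>n. cq I (fps_nth G n * w1 ^ n)) sums cq I S1"
    by (rule bounded_linear.sums[OF bounded_linear_cq s1])
  have t2: "(\<lambda>n. cq I (fps_nth G n * w2 ^ n)) sums cq I S2"
    by (rule bounded_linear.sums[OF bounded_linear_cq s2])
  have s: "(\<lambda>n. A * cq I (fps_nth G n * w1 ^ n) + B * cq I (fps_nth G n * w2 ^ n))
       sums (A * cq I S1 + B * cq I S2)"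
    by (intro sums_add sums_mult t1 t2)
  have e: "(A * cq I (w1 ^ k) + B * cq I (w2 ^ k)) * cq I (fps_nth G k) =
        A * cq I (fps_nth G k * w1 ^ k) + B * cq I (fps_nth G k * w2 ^ k)" for k
  proof -
    have "(A * cq I (w1 ^ k) + B * cq I (w2 ^ k)) * cq I (fps_nth G k)
       = A * (cq I (w1 ^ k) * cq I (fps_nth G k)) + B * (cq I (w2 ^ k) * cq I (fps_nth G k))"
      by (simp add: distrib_right mult.assoc)
    also have "\<dots> = A * cq I (fps_nth G k * w1 ^ k) + B * cq I (fps_nth G k * w2 ^ k)"
      by (simp add: cq_mult[OF I, symmetric] mult.commute)
    finally show ?thesis .
  qed
  show ?thesis using s unfolding e[symmetric] .
qed

lemma cq_mobc:
  assumes I: "I * I = (-1::quat)"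
  shows "cq I (mobc c a u n) = mobc (cq I c) (cq I a) (cq I u) n"
  by (simp add: mobc_def cq_diff cq_mult[OF I] cq_power[OF I])

lemma qpower_diff:
  fixes q p :: quat
  assumes "norm q \<le> 1" "norm p \<le> 1"
  shows "norm (q ^ n - p ^ n) \<le> real n * norm (q - p)"
proof (induction n)
  case (Suc n)
  have "q ^ Suc n - p ^ Suc n = q * (q ^ n - p ^ n) + (q - p) * p ^ n"
    by (simp add: algebra_simps)
  hence "norm (q ^ Suc n - p ^ Suc n) \<le> norm q * norm (q ^ n - p ^ n) + norm (q - p) * norm p ^ n"
    by (metis norm_triangle_ineq norm_mult norm_power order_trans order_refl)
  also have "\<dots> \<le> 1 * (real n * norm (q - p)) + norm (q - p) * 1"
    using assms Suc by (intro add_mono mult_mono mult_left_mono) (simp_all add: power_le_one)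
  finally show ?case by (simp add: algebra_simps)
qed simp

lemma two_fix:
  assumes a: "norm a < 1" and u: "norm u = 1"
    and p: "norm p < 1" "mob a u p = p" and p': "norm p' < 1" "mob a u p' = p'" and ne: "p \<noteq> p'"
  shows "mob a u z = z"
proof (cases "a = 0")
  case True
  have h1: "- (p * u) = p" "- (p' * u) = p'" using p p' True by (simp_all add: mob_def mult.commute)
  have "p + p * u = 0" "p' + p' * u = 0" using h1 by (metis eq_neg_iff_add_eq_0)+
  hence "(1 + u) * p = 0" "(1 + u) * p' = 0" by (simp_all add: algebra_simps)
  hence "1 + u = 0" using ne by auto
  hence "u = -1" by (simp add: add_eq_0_iff)
  thus ?thesis using True by (simp add: mob_def)
next
  case False
  obtain z1 z2 where fac: "\<forall>z. mobP a u z = cnj a * (z - z1) * (z - z2)" and pr: "z1 * z2 = a * u / cnj a"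
    using mobP_roots[OF False] by blast
  have "mobP a u p = 0" using mob_fix_iff[OF mob_denom_nz[OF a]] p by simp
  hence pz: "p = z1 \<or> p = z2" using fac False by simp
  have "mobP a u p' = 0" using mob_fix_iff[OF mob_denom_nz[OF a]] p' by simp
  hence pz': "p' = z1 \<or> p' = z2" using fac False by simp
  have "p * p' = z1 * z2" using pz pz' ne by (auto simp: mult.commute)
  hence "norm p * norm p' = 1" using pr False u by (simp add: norm_mult[symmetric] norm_divide norm_mult)
  moreover have "norm p * norm p' < 1" using p p'
    by (metis mult_strict_mono' norm_ge_zero mult_1_right)
  ultimately show ?thesis by simp
qed

lemma sr_fps_eq:
  assumes "\<forall>q\<in>qball. (\<lambda>k. q ^ k * cq I (fps_nth H k)) sums h q"
  shows "sr_fps h = fmap I H"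
proof -
  let ?P = "\<lambda>F. \<forall>q\<in>qball. (\<lambda>n. q ^ n * fps_nth F n) sums h q"
  have pH: "?P (fmap I H)" using assms by simp
  hence "?P (SOME F. ?P F)" by (rule someI)
  hence "(SOME F. ?P F) = fmap I H" using pH by (rule quat_powser_unique)
  thus ?thesis by (simp add: sr_fps_def)
qed

lemma conv_lt:
  assumes "fps_conv_radius H \<ge> 1" "norm (z::complex) < 1"
  shows "ereal (norm z) < fps_conv_radius H"
proof -
  have "ereal (norm z) < 1" using assms(2) by (simp add: one_ereal_def)
  thus ?thesis using assms(1) by (rule less_le_trans)
qed

lemma eball_one: "eball (0::complex) 1 = ball 0 1"
  by (simp add: one_ereal_def)

locale qsetup =
  fixes f :: "quat \<Rightarrow> quat" and I :: quat and a u :: complex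
  assumes I: "I * I = -1" and a: "norm a < 1" and u: "norm u = 1"
    and fval: "\<forall>q\<in>qball. (\<lambda>n. q ^ n * cq I (fps_nth (Gm a u) n)) sums f q"
begin

abbreviation g where "g \<equiv> mob a u"

lemma sr_fps_f: "sr_fps f = fmap I (Gm a u)"
  by (rule sr_fps_eq[OF fval])

definition iter_inv :: "nat \<Rightarrow> complex fps \<Rightarrow> bool" where
  "iter_inv n H \<longleftrightarrow> fps_conv_radius H \<ge> 1 \<and> (\<forall>w. norm w < 1 \<longrightarrow> eval_fps H w = (g ^^ Suc n) w) \<and>
      (\<forall>q\<in>qball. (\<lambda>k. q ^ k * cq I (fps_nth H k)) sums sr_iter f n q)"

lemma iter_val:
  assumes inv: "iter_inv n H" and J: "J * J = -1" and z: "norm z < 1"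
  shows "sr_iter f n (cq J z) = qA J I * cq I ((g ^^ Suc n) z) + qB J I * cq I ((g ^^ Suc n) (cnj z))"
proof -
  have q: "cq J z \<in> qball" using z norm_cq[OF J] by simp
  have s1: "(\<lambda>k. cq J z ^ k * cq I (fps_nth H k)) sums sr_iter f n (cq J z)"
    using inv q by (simp add: iter_inv_def)
  have s2: "(\<lambda>k. cq J z ^ k * cq I (fps_nth H k)) sums
      (qA J I * cq I (eval_fps H z) + qB J I * cq I (eval_fps H (cnj z)))"
    by (rule rep_sums[OF I J _ z]) (use inv in \<open>simp add: iter_inv_def\<close>)
  from sums_unique2[OF s1 s2] show ?thesis
    using inv z by (simp add: iter_inv_def)
qed

lemma iter_inv_0: "iter_inv 0 (Gm a u)"
  unfolding iter_inv_def using Gm_conv1[OF a u] Gm_eval[OF a u] fval by simp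

lemma iter_inv_Suc:
  assumes inv: "iter_inv n H"
  shows "iter_inv (Suc n) (fps_expansion (g ^^ Suc (Suc n)) 0)"
proof -
  define h where "h = g ^^ Suc n"
  define H' where "H' = fps_expansion (g ^^ Suc (Suc n)) 0"
  have Hc: "fps_conv_radius H \<ge> 1" and Hev: "\<And>w. norm w < 1 \<Longrightarrow> eval_fps H w = h w"
    and Hs: "\<forall>q\<in>qball. (\<lambda>k. q ^ k * cq I (fps_nth H k)) sums sr_iter f n q"
    using inv by (simp_all add: iter_inv_def h_def)
  have hd: "norm (h w) < 1" if "norm w < 1" for w
    using mob_iter_disc[OF a u that, of "Suc n"] by (simp add: h_def del: funpow.simps)
  have holo: "(g ^^ Suc (Suc n)) holomorphic_on eball 0 1"
    using mob_iter_holo[OF a u, of "Suc (Suc n)"] by (simp only: eball_one)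
  have H'c: "fps_conv_radius H' \<ge> 1" unfolding H'_def by (rule conv_radius_fps_expansion[OF holo])
  have H'ev: "eval_fps H' w = g (h w)" if "norm w < 1" for w
    using eval_fps_expansion'[OF holo, of w] that by (simp add: H'_def h_def one_ereal_def)
  have sfp: "sr_fps (sr_iter f n) = fmap I H" by (rule sr_fps_eq[OF Hs])
  have main: "(\<lambda>k. q ^ k * cq I (fps_nth H' k)) sums sr_iter f (Suc n) q" if q: "q \<in> qball" for q
  proof -
    obtain J z where J: "J * J = -1" and qz: "q = cq J z" using decomp[of q] by blast
    have z: "norm z < 1" using q qz norm_cq[OF J] by simp
    have zc: "norm (cnj z) < 1" using z by simp
    have sp: "sr_star_pow (sr_iter f n) k q = qA J I * cq I (h z ^ k) + qB J I * cq I (h (cnj z) ^ k)" for k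
    proof -
      have "sr_star_pow (sr_iter f n) k = sr_eval (fmap I (H ^ k))"
        by (simp add: sr_star_pow_def sfp fmap_power[OF I])
      moreover have "(\<lambda>j. q ^ j * cq I (fps_nth (H ^ k) j)) sums
          (qA J I * cq I (eval_fps (H ^ k) z) + qB J I * cq I (eval_fps (H ^ k) (cnj z)))"
        unfolding qz by (rule rep_sums[OF I J _ z]) (use Hc fps_conv_radius_power[of H k] in \<open>simp\<close>)
      ultimately have "sr_star_pow (sr_iter f n) k q =
          qA J I * cq I (eval_fps (H ^ k) z) + qB J I * cq I (eval_fps (H ^ k) (cnj z))"
        by (simp add: sr_eval_def sums_iff)
      also have "eval_fps (H ^ k) z = h z ^ k"
        using eval_fps_power[OF conv_lt[OF Hc z]] Hev[OF z] by simp
      also have "eval_fps (H ^ k) (cnj z) = h (cnj z) ^ k"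
        using eval_fps_power[OF conv_lt[OF Hc zc]] Hev[OF zc] by simp
      finally show ?thesis .
    qed
    have s: "(\<lambda>k. (qA J I * cq I (h z ^ k) + qB J I * cq I (h (cnj z) ^ k)) * cq I (fps_nth (Gm a u) k))
        sums (qA J I * cq I (g (h z)) + qB J I * cq I (g (h (cnj z))))"
      by (rule rep2[OF I Gm_sums[OF a u] Gm_sums[OF a u]]) (use hd[OF z] hd[OF zc] in auto)
    have v: "sr_iter f (Suc n) q = qA J I * cq I (g (h z)) + qB J I * cq I (g (h (cnj z)))"
      using s by (simp add: sr_comp_def sp sr_fps_f sums_iff h_def)
    have "(\<lambda>k. q ^ k * cq I (fps_nth H' k)) sums
        (qA J I * cq I (eval_fps H' z) + qB J I * cq I (eval_fps H' (cnj z)))"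
      unfolding qz by (rule rep_sums[OF I J H'c z])
    thus ?thesis using v H'ev[OF z] H'ev[OF zc] by simp
  qed
  show ?thesis unfolding iter_inv_def
    using H'c H'ev main by (simp add: H'_def h_def)
qed

lemma iter_exists: "\<exists>H. iter_inv n H"
proof (induction n)
  case 0 show ?case using iter_inv_0 by blast
next
  case (Suc n) thus ?case using iter_inv_Suc by blast
qed

lemma iter_value:
  assumes J: "J * J = -1" and z: "norm z < 1"
  shows "sr_iter f n (cq J z) = qA J I * cq I ((g ^^ Suc n) z) + qB J I * cq I ((g ^^ Suc n) (cnj z))"
  using iter_exists[of n] iter_val[OF _ J z] by blast

lemma f_value:
  assumes J: "J * J = -1" and z: "norm z < 1"
  shows "f (cq J z) = qA J I * cq I (g z) + qB J I * cq I (g (cnj z))"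
  using iter_value[OF J z, of 0] by simp

lemma f_slice: "norm z < 1 \<Longrightarrow> f (cq I z) = cq I (g z)"
  using f_value[OF I, of z] by (simp add: qA_I[OF I] qB_I[OF I])

end

context qsetup
begin

lemma qAB_lin: "qA J I * x + qB J I * y = (1/2) *\<^sub>R ((x + y) - (J * I) * (x - y))"
  by (simp add: qA_def qB_def algebra_simps)

lemma nofix:
  assumes ne: "\<exists>q\<in>qball. f q \<noteq> q" and ne2: "\<not> elliptic f"
  shows "\<forall>z. norm z < 1 \<longrightarrow> g z \<noteq> z"
proof (rule ccontr)
  assume "\<not> (\<forall>z. norm z < 1 \<longrightarrow> g z \<noteq> z)"
  then obtain p where p: "norm p < 1" "g p = p" by blast
  show False
  proof (cases "\<exists>p'. norm p' < 1 \<and> g p' = p' \<and> p' \<noteq> p")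
    case True
    then obtain p' where p': "norm p' < 1" "g p' = p'" "p' \<noteq> p" by blast
    have gid: "g z = z" for z by (rule two_fix[OF a u p p'(1,2) p'(3)[symmetric]])
    have "f q = q" if q: "q \<in> qball" for q
    proof -
      obtain J z where J: "J * J = -1" and qz: "q = cq J z" using decomp[of q] by blast
      have z: "norm z < 1" using q qz norm_cq[OF J] by simp
      show ?thesis using f_value[OF J z] qAB_rep[OF I, of J z] qz by (simp add: gid)
    qed
    with ne show False by blast
  next
    case False
    hence uniq: "norm w < 1 \<Longrightarrow> g w = w \<Longrightarrow> w = p" for w by blast
    have in_slice: "q = cq I p" if q: "q \<in> qball" "f q = q" for q
    proof -
      obtain J z where J: "J * J = -1" and qz: "q = cq J z" using decomp[of q] by blast
      have z: "norm z < 1" using q qz norm_cq[OF J] by simp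
      have "\<exists>z'. q = cq I z'"
      proof -
        define d1 where "d1 = g z - z"
        define d2 where "d2 = g (cnj z) - cnj z"
        have "f q - q = qA J I * cq I d1 + qB J I * cq I d2"
          using f_value[OF J z] qAB_rep[OF I, of J z] qz
          by (simp add: d1_def d2_def cq_diff algebra_simps)
        hence e0: "qA J I * cq I d1 + qB J I * cq I d2 = 0" using q by simp
        hence "(1/2::real) *\<^sub>R ((cq I d1 + cq I d2) - (J * I) * (cq I d1 - cq I d2)) = 0"
          by (simp add: qAB_lin)
        hence e: "cq I d1 + cq I d2 = (J * I) * (cq I d1 - cq I d2)" by simp
        show ?thesis
        proof (cases "d1 = d2")
          case True
          hence "cq I d1 + cq I d1 = 0" using e by simp
          hence "cq I (d1 + d1) = 0" by (simp only: cq_add)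
          hence "d1 + d1 = 0" using cq_inj[OF I, of "d1 + d1" 0] by simp
          hence d10: "d1 = 0" by simp
          hence "g z = z" "g (cnj z) = cnj z" using True by (simp_all add: d1_def d2_def)
          moreover have "norm (cnj z) < 1" using z by simp
          ultimately have "z = p" "cnj z = p" using uniq z by blast+
          hence "cnj z = z" by simp
          hence "Im z = 0" by (metis cnj.simps(2) neg_equal_zero)
          hence "q = cq I z" using qz by (simp add: cq_def)
          thus ?thesis by blast
        next
          case False
          have nz: "cq I d1 - cq I d2 \<noteq> 0" using False cq_inj[OF I] by (simp add: cq_diff[symmetric]) (metis cq_zero cq_inj[OF I] eq_iff_diff_eq_0)
          have "J * I = (cq I d1 + cq I d2) * inverse (cq I d1 - cq I d2)"
            using e nz by (simp add: mult.assoc)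
          also have "\<dots> = cq I ((d1 + d2) / (d1 - d2))"
            by (simp add: cq_divide[OF I] cq_add cq_diff)
          finally have JI: "J * I = cq I ((d1 + d2) / (d1 - d2))" .
          have "J = (J * I) * (- I)" using I by (simp add: mult.assoc)
          also have "- I = cq I (- \<i>)" by (simp add: cq_uminus)
          finally have "J = cq I ((d1 + d2) / (d1 - d2)) * cq I (- \<i>)" using JI by simp
          hence "J = cq I ((d1 + d2) / (d1 - d2) * (- \<i>))" by (simp only: cq_mult[OF I])
          then obtain j where j: "J = cq I j" by blast
          have "q = cq I (of_real (Re z) + of_real (Im z) * j)"
            using qz j by (simp add: cq_def cq_add cq_mult[OF I] scaleR_conv_of_real distrib_left mult.assoc)
          thus ?thesis by blast
        qed
      qed
      then obtain z' where qz': "q = cq I z'" by blast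
      have z': "norm z' < 1" using q qz' norm_cq[OF I] by simp
      have "cq I (g z') = cq I z'" using f_slice[OF z'] q qz' by simp
      hence "g z' = z'" by (rule cq_inj[OF I])
      hence "z' = p" using uniq z' by simp
      thus ?thesis using qz' by simp
    qed
    have pin: "cq I p \<in> qball" using p norm_cq[OF I] by simp
    have pf: "f (cq I p) = cq I p" using f_slice[OF p(1)] p(2) by simp
    have "elliptic f" unfolding elliptic_def
      using pin pf in_slice by blast
    with ne2 show False by blast
  qed
qed

end

context qsetup
begin

lemma unif:
  assumes dw: "dw_prop a u tc" and K: "compact K" "K \<subseteq> qball"
  shows "uniform_limit K (\<lambda>n. sr_iter f n) (\<lambda>_. cq I tc) sequentially"
proof (cases "K = {}")
  case True thus ?thesis by (simp add: uniform_limit_sequentially_iff)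
next
  case False
  obtain x0 where x0: "x0 \<in> K" "\<forall>y\<in>K. norm y \<le> norm x0"
    using continuous_attains_sup[OF K(1) False continuous_on_norm_id] by blast
  define r where "r = norm x0"
  have r1: "r < 1" using x0 K(2) by (auto simp: r_def)
  have rK: "norm q \<le> r" if "q \<in> K" for q using x0 that by (simp add: r_def)
  show ?thesis unfolding uniform_limit_sequentially_iff
  proof (intro allI impI)
    fix e :: real assume e: "e > 0"
    have "e / 2 > 0" using e by simp
    then obtain N where N: "\<forall>n\<ge>N. \<forall>z. norm z \<le> r \<longrightarrow> norm ((g ^^ n) z - tc) < e / 2"
      using dw r1 unfolding dw_prop_def by blast
    have "\<forall>n\<ge>N. \<forall>x\<in>K. dist (sr_iter f n x) (cq I tc) < e"
    proof (intro allI impI ballI)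
      fix n x assume n: "n \<ge> N" and x: "x \<in> K"
      obtain J z where J: "J * J = -1" and xz: "x = cq J z" using decomp[of x] by blast
      have zr: "norm z \<le> r" using rK[OF x] xz norm_cq[OF J] by simp
      have z: "norm z < 1" using zr r1 by simp
      define h where "h = g ^^ Suc n"
      have v: "sr_iter f n x = qA J I * cq I (h z) + qB J I * cq I (h (cnj z))"
        using iter_value[OF J z] xz by (simp add: h_def)
      have t: "cq I tc = qA J I * cq I tc + qB J I * cq I tc" by (simp add: qAB_combine)
      have "sr_iter f n x - cq I tc = qA J I * cq I (h z - tc) + qB J I * cq I (h (cnj z) - tc)"
        by (subst t, simp add: v cq_diff algebra_simps)
      hence "norm (sr_iter f n x - cq I tc) \<le> norm (qA J I) * norm (h z - tc) + norm (qB J I) * norm (h (cnj z) - tc)"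
        by (metis norm_triangle_ineq norm_mult norm_cq[OF I])
      also have "\<dots> \<le> 1 * norm (h z - tc) + 1 * norm (h (cnj z) - tc)"
        by (intro add_mono mult_right_mono norm_qA[OF I J] norm_qB[OF I J]) simp_all
      also have "\<dots> < e / 2 + e / 2"
      proof -
        have sn: "Suc n \<ge> N" using n by simp
        have "norm (h z - tc) < e / 2" using N sn zr unfolding h_def by blast
        moreover have "norm (cnj z) \<le> r" using zr by simp
        hence "norm (h (cnj z) - tc) < e / 2" using N sn unfolding h_def by blast
        ultimately show ?thesis by simp
      qed
      finally show "dist (sr_iter f n x) (cq I tc) < e" by (simp add: dist_norm)
    qed
    thus "\<exists>N. \<forall>n\<ge>N. \<forall>x\<in>K. dist (sr_iter f n x) (cq I tc) < e" by blast
  qed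
qed

lemma lim:
  assumes dw: "dw_prop a u tc"
  shows "(f \<longlongrightarrow> cq I tc) (at (cq I tc) within qball)"
proof -
  have tc1: "norm tc = 1" and gtc: "g tc = tc" using dw by (simp_all add: dw_prop_def)
  define C where "C = (\<Sum>n. real n * norm (fps_nth (Gm a u) n))"
  have Cs: "summable (\<lambda>n. real n * norm (fps_nth (Gm a u) n))" by (rule Gm_nsum[OF a u])
  have C0: "C \<ge> 0" unfolding C_def by (rule suminf_nonneg[OF Cs]) simp
  define \<tau> where "\<tau> = cq I tc"
  have tn: "norm \<tau> = 1" using tc1 norm_cq[OF I] by (simp add: \<tau>_def)
  have st: "(\<lambda>n. \<tau> ^ n * cq I (fps_nth (Gm a u) n)) sums \<tau>"
  proof -
    have "(\<lambda>n. cq I (fps_nth (Gm a u) n * tc ^ n)) sums cq I (g tc)"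
      by (rule bounded_linear.sums[OF bounded_linear_cq Gm_sums[OF a u]]) (use tc1 in simp)
    thus ?thesis by (simp add: \<tau>_def gtc cq_mult[OF I] cq_power[OF I] mult.commute)
  qed
  have bound: "norm (f q - \<tau>) \<le> C * norm (q - \<tau>)" if q: "q \<in> qball" for q
  proof -
    have sd: "(\<lambda>n. q ^ n * cq I (fps_nth (Gm a u) n) - \<tau> ^ n * cq I (fps_nth (Gm a u) n)) sums (f q - \<tau>)"
      by (rule sums_diff[OF fval[rule_format, OF q] st])
    have nb: "norm (q ^ n * cq I (fps_nth (Gm a u) n) - \<tau> ^ n * cq I (fps_nth (Gm a u) n))
        \<le> real n * norm (fps_nth (Gm a u) n) * norm (q - \<tau>)" for n
    proof -
      have "q ^ n * cq I (fps_nth (Gm a u) n) - \<tau> ^ n * cq I (fps_nth (Gm a u) n)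
          = (q ^ n - \<tau> ^ n) * cq I (fps_nth (Gm a u) n)" by (simp add: algebra_simps)
      hence "norm (q ^ n * cq I (fps_nth (Gm a u) n) - \<tau> ^ n * cq I (fps_nth (Gm a u) n))
          = norm (q ^ n - \<tau> ^ n) * norm (fps_nth (Gm a u) n)" by (simp add: norm_mult norm_cq[OF I])
      also have "\<dots> \<le> (real n * norm (q - \<tau>)) * norm (fps_nth (Gm a u) n)"
        by (rule mult_right_mono[OF qpower_diff]) (use q tn in auto)
      finally show ?thesis by (simp add: algebra_simps)
    qed
    have "norm (f q - \<tau>) \<le> (\<Sum>n. real n * norm (fps_nth (Gm a u) n) * norm (q - \<tau>))"
      using norm_suminf_le[OF nb summable_mult2[OF Cs]] sd by (simp add: sums_iff)
    also have "\<dots> = C * norm (q - \<tau>)" unfolding C_def by (rule suminf_mult2[symmetric, OF Cs])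
    finally show ?thesis .
  qed
  show ?thesis unfolding \<tau>_def[symmetric] tendsto_iff eventually_at
  proof (intro allI impI)
    fix e :: real assume e: "e > 0"
    define d where "d = e / (C + 1)"
    have d: "d > 0" using e C0 by (simp add: d_def)
    have "\<forall>x\<in>qball. x \<noteq> \<tau> \<and> dist x \<tau> < d \<longrightarrow> dist (f x) \<tau> < e"
    proof (intro ballI impI)
      fix x assume x: "x \<in> qball" and xd: "x \<noteq> \<tau> \<and> dist x \<tau> < d"
      have "dist (f x) \<tau> \<le> C * dist x \<tau>" using bound[OF x] by (simp add: dist_norm)
      also have "\<dots> \<le> C * d" using xd C0 by (intro mult_left_mono) simp_all
      also have "\<dots> < e" using e C0 by (simp add: d_def field_simps)
      finally show "dist (f x) \<tau> < e" .
    qed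
    thus "\<exists>d>0. \<forall>x\<in>qball. x \<noteq> \<tau> \<and> dist x \<tau> < d \<longrightarrow> dist (f x) \<tau> < e" using d by blast
  qed
qed

end

lemma qcnj_qcnj: "qcnj (qcnj x) = x" by (simp add: qcnj_def quat_eq_iff)
lemma norm_qcnj: "norm (qcnj x) = norm x" by (simp add: qcnj_def norm_quat_explicit)

lemma cslice_cq: "x \<in> cslice I \<Longrightarrow> \<exists>w. x = cq I w"
proof -
  assume "x \<in> cslice I"
  then obtain r s where "x = of_real r + of_real s * I" by (auto simp: cslice_def)
  hence "x = cq I (Complex r s)" by (simp add: cq_def scaleR_conv_of_real)
  thus ?thesis by blast
qed

lemma real_in_bslice:
  assumes "\<bar>t\<bar> < 1" shows "(of_real t :: quat) \<in> bslice I"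
proof -
  have "(of_real t :: quat) = of_real t + of_real 0 * I" by simp
  hence "(of_real t :: quat) \<in> cslice I" unfolding cslice_def by blast
  thus ?thesis using assms by (simp add: bslice_def)
qed

lemma mobc_norm_le:
  fixes c a u :: quat
  assumes "norm c < 1" "norm a < 1" "norm u = 1"
  shows "norm (mobc c a u n) \<le> 2"
proof -
  have "norm (mobc c a u n) \<le> norm (c ^ n * a * u) + norm (if n = 0 then 0 else c ^ (n - 1) * u)"
    unfolding mobc_def by (rule norm_triangle_ineq4)
  also have "norm (c ^ n * a * u) \<le> 1"
  proof -
    have "norm (c ^ n * a * u) = norm c ^ n * norm a" using assms by (simp add: norm_mult norm_power)
    also have "\<dots> \<le> 1" by (rule mult_le_one) (use assms in \<open>simp_all add: power_le_one less_imp_le\<close>)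
    finally show ?thesis .
  qed
  also have "norm (if n = 0 then 0 else c ^ (n - 1) * u) \<le> 1" using assms
    by (simp add: norm_mult norm_power power_le_one less_imp_le)
  finally show ?thesis by simp
qed

lemma real_series:
  fixes c a u :: quat
  assumes "norm c < 1" "norm a < 1" "norm u = 1" "\<bar>t\<bar> < 1"
  shows "summable (\<lambda>n. (of_real t :: quat) ^ n * mobc c a u n)"
proof -
  have "summable (\<lambda>n. norm ((of_real t :: quat) ^ n * mobc c a u n))"
  proof (rule summable_norm_comparison_test)
    show "\<exists>N. \<forall>n\<ge>N. norm ((of_real t :: quat) ^ n * mobc c a u n) \<le> 2 * \<bar>t\<bar> ^ n"
    proof (intro exI allI impI)
      fix n :: nat
      have "norm ((of_real t :: quat) ^ n * mobc c a u n) = \<bar>t\<bar> ^ n * norm (mobc c a u n)"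
        by (simp add: norm_mult norm_power)
      also have "\<dots> \<le> \<bar>t\<bar> ^ n * 2" by (rule mult_left_mono[OF mobc_norm_le[OF assms(1-3)]]) simp
      finally show "norm ((of_real t :: quat) ^ n * mobc c a u n) \<le> 2 * \<bar>t\<bar> ^ n" by (simp add: mult.commute)
    qed
    show "summable (\<lambda>n. 2 * \<bar>t\<bar> ^ n)" using assms(4) by (intro summable_mult summable_geometric) simp
  qed
  thus ?thesis by (rule summable_norm_cancel)
qed

lemma slice_solve:
  fixes c u y0 y1 y2 :: quat
  assumes I: "I * I = -1" and w: "y0 = cq I w0" "y1 = cq I w1" "y2 = cq I w2" and ne: "y1 \<noteq> y2"
    and e1: "c * y1 = 2 *\<^sub>R (y1 - y0) + u" and e2: "c * y2 = 2 *\<^sub>R (y0 - y2) + u"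
  shows "\<exists>c' u'. c = cq I c' \<and> u = cq I u'"
proof -
  have "c * (y1 - y2) = 2 *\<^sub>R (y1 - y0) - 2 *\<^sub>R (y0 - y2)" using e1 e2 by (simp add: algebra_simps)
  moreover have d: "y1 - y2 \<noteq> 0" using ne by simp
  ultimately have "c = (2 *\<^sub>R (y1 - y0) - 2 *\<^sub>R (y0 - y2)) * inverse (y1 - y2)"
  proof -
    assume h: "c * (y1 - y2) = 2 *\<^sub>R (y1 - y0) - 2 *\<^sub>R (y0 - y2)"
    have "c = c * ((y1 - y2) * inverse (y1 - y2))" using d by simp
    also have "\<dots> = (c * (y1 - y2)) * inverse (y1 - y2)" by (simp only: mult.assoc)
    finally show ?thesis using h by simp
  qed
  also have "\<dots> = cq I ((2 *\<^sub>R (w1 - w0) - 2 *\<^sub>R (w0 - w2)) / (w1 - w2))"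
    by (simp add: w cq_divide[OF I] cq_diff cq_scaleR)
  finally have c: "c = cq I ((2 *\<^sub>R (w1 - w0) - 2 *\<^sub>R (w0 - w2)) / (w1 - w2))" .
  then obtain c' where c': "c = cq I c'" by blast
  have "u = c * y1 - 2 *\<^sub>R (y1 - y0)" using e1 by simp
  also have "\<dots> = cq I (c' * w1 - 2 *\<^sub>R (w1 - w0))" by (simp add: c' w cq_mult[OF I] cq_diff cq_scaleR)
  finally show ?thesis using c' by blast
qed

lemma of_real_comm: "(of_real t :: quat) * x = x * of_real t"
  by (simp add: of_real_def)

theorem theorem5p3:
  fixes f :: "quat \<Rightarrow> quat" and a u I :: quat
  assumes "f \<in> qAut"
    and "a \<in> qball" and "norm u = 1" and "\<forall>q\<in>qball. f q = reg_mobius a u q"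
    and "\<exists>q\<in>qball. f q \<noteq> q"
    and "\<not> elliptic f"
    and "I \<in> imag_units" and "f ` bslice I \<subseteq> bslice I"
  shows "\<exists>\<tau>. norm \<tau> = 1 \<and> (f \<longlongrightarrow> \<tau>) (at \<tau> within qball) \<and>
           (\<forall>K. compact K \<and> K \<subseteq> qball \<longrightarrow>
                uniform_limit K (\<lambda>n. sr_iter f n) (\<lambda>_. \<tau>) sequentially)"
proof -
  note aut = assms(1) and aB = assms(2) and un = assms(3) and fm = assms(4)
    and nid = assms(5) and nell = assms(6) and Iu = assms(7) and sl = assms(8)
  have I: "I * I = -1" using Iu by (simp add: imag_units_def power2_eq_square)
  define c where "c = qcnj a"
  have an: "norm a < 1" using aB by simp
  have cn: "norm c < 1" using an by (simp add: c_def norm_qcnj)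
  have fser: "f q = (\<Sum>n. q ^ n * mobc c a u n)" if "q \<in> qball" for q
    using fm that by (simp add: reg_mobius_def fps_mob sr_eval_def c_def)
  have inj: "inj_on f qball" using aut by (auto simp: qAut_def dest: bij_betw_imp_inj_on)
  have tel: "f (of_real t) - (of_real t * c) * f (of_real t) = a * u - of_real t * u" if t: "\<bar>t\<bar> < 1" for t
  proof -
    have tq: "(of_real t :: quat) \<in> qball" using t by simp
    have "(\<lambda>n. (of_real t :: quat) ^ n * mobc c a u n) sums f (of_real t)"
      using real_series[OF cn an un t] fser[OF tq] by (simp add: summable_sums)
    from mobc_telescope[OF this of_real_comm] show ?thesis .
  qed
  have yin: "\<exists>w. f (of_real t) = cq I w" if t: "\<bar>t\<bar> < 1" for t
  proof -
    have "f (of_real t) \<in> bslice I" using sl real_in_bslice[OF t] by blast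
    thus ?thesis using cslice_cq by (simp add: bslice_def)
  qed
  define y0 where "y0 = f (of_real 0)"
  define y1 where "y1 = f (of_real (1/2))"
  define y2 where "y2 = f (of_real (-1/2))"
  obtain w0 w1 w2 where w: "y0 = cq I w0" "y1 = cq I w1" "y2 = cq I w2"
    using yin[of 0] yin[of "1/2"] yin[of "-1/2"] by (auto simp: y0_def y1_def y2_def)
  have y0: "y0 = a * u" using tel[of 0] by (simp add: y0_def)
  have ne: "y1 \<noteq> y2"
  proof
    assume "y1 = y2"
    hence fe: "f (of_real (1/2)) = f (of_real (-1/2))" by (simp add: y1_def y2_def)
    have rb: "\<And>t. \<bar>t\<bar> < 1 \<Longrightarrow> (of_real t::quat) \<in> qball" by simp
    have m: "(of_real (1/2)::quat) \<in> qball" "(of_real (-1/2)::quat) \<in> qball"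
      by (rule rb, simp)+
    have "(of_real (1/2) :: quat) = of_real (-1/2)" by (rule inj_onD[OF inj fe m])
    hence "(1/2::real) = -1/2" by (simp only: of_real_eq_iff)
    thus False by simp
  qed
  have e1: "c * y1 = 2 *\<^sub>R (y1 - y0) + u"
  proof -
    have "y1 - (1/2) *\<^sub>R (c * y1) = y0 - (1/2) *\<^sub>R u"
      using tel[of "1/2"] by (simp add: y1_def y0 scaleR_conv_of_real mult.assoc)
    hence "(1/2::real) *\<^sub>R (c * y1) = (1/2::real) *\<^sub>R (2 *\<^sub>R (y1 - y0) + u)"
      by (simp add: algebra_simps)
    thus ?thesis by simp
  qed
  have e2: "c * y2 = 2 *\<^sub>R (y0 - y2) + u"
  proof -
    have "y2 + (1/2) *\<^sub>R (c * y2) = y0 + (1/2) *\<^sub>R u"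
      using tel[of "-1/2"] by (simp add: y2_def y0 scaleR_conv_of_real mult.assoc)
    hence "(1/2::real) *\<^sub>R (c * y2) = (1/2::real) *\<^sub>R (2 *\<^sub>R (y0 - y2) + u)"
      by (simp add: algebra_simps)
    thus ?thesis by simp
  qed
  obtain c' u' where cu: "c = cq I c'" "u = cq I u'" using slice_solve[OF I w ne e1 e2] by blast
  define a' where "a' = cnj c'"
  have "a = qcnj c" by (simp add: c_def qcnj_qcnj)
  also have "qcnj c = cq I (cnj c')" using cu(1) qcnj_cq[OF I] by simp
  finally have aa: "a = cq I a'" by (simp add: a'_def)
  have an': "norm a' < 1" using an aa norm_cq[OF I] by simp
  have un': "norm u' = 1" using un cu norm_cq[OF I] by simp
  have coef: "cq I (fps_nth (Gm a' u') n) = mobc c a u n" for n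
    by (simp add: Gm_def cq_mobc[OF I] aa cu(2)[symmetric] c_def qcnj_cq[OF I])
  have fval: "\<forall>q\<in>qball. (\<lambda>n. q ^ n * cq I (fps_nth (Gm a' u') n)) sums f q"
  proof
    fix q :: quat assume q: "q \<in> qball"
    obtain J z where J: "J * J = -1" and qz: "q = cq J z" using decomp[of q] by blast
    have z: "norm z < 1" using q qz norm_cq[OF J] by simp
    have s: "(\<lambda>n. q ^ n * cq I (fps_nth (Gm a' u') n)) sums
        (qA J I * cq I (eval_fps (Gm a' u') z) + qB J I * cq I (eval_fps (Gm a' u') (cnj z)))"
      unfolding qz by (rule rep_sums[OF I J Gm_conv1[OF an' un'] z])
    have "f q = (\<Sum>n. q ^ n * cq I (fps_nth (Gm a' u') n))" using fser[OF q] by (simp add: coef)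
    thus "(\<lambda>n. q ^ n * cq I (fps_nth (Gm a' u') n)) sums f q" using s by (simp add: sums_iff)
  qed
  interpret qsetup f I a' u' using I an' un' fval by unfold_locales
  have nf: "\<forall>z. norm z < 1 \<longrightarrow> mob a' u' z \<noteq> z" by (rule nofix[OF nid nell])
  obtain tc where dw: "dw_prop a' u' tc" using mob_dw[OF an' un' nf] by blast
  have "norm (cq I tc) = 1" using dw norm_cq[OF I] by (simp add: dw_prop_def)
  moreover note lim[OF dw]
  moreover have "\<forall>K. compact K \<and> K \<subseteq> qball \<longrightarrow> uniform_limit K (\<lambda>n. sr_iter f n) (\<lambda>_. cq I tc) sequentially"
    using unif[OF dw] by blast
  ultimately show ?thesis by blast
qed

end
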